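(* Let $E$ and $\tilde{E}$ be the right and left algebraic eigenspaces of the nonlinear eigenvalues of $P(z)$ enclosed in $\Gamma$, respectively. Then (1) $E = F \mathcal{E}$, (2) $\tilde{E} = L\tilde{\mathcal{E}}$.
   Context: Let $A_0, \ldots, A_d \in \mathbb{C}^{n\times n}$ with $A_d \neq 0$ (not necessarily invertible), and let $P(z) = \sum_{j=0}^d z^j A_j$, with $\det P(z)$ not identically zero. A number $\lambda$ is a nonlinear eigenvalue if $P(\lambda)x=0$, $\tilde{x}^*P(\lambda)=0$ for nontrivial $x,\tilde{x}\in\mathbb{C}^n$. Ordered sequences $x_0,\ldots,x_{k-1}$ and $\tilde{x}_0,\ldots,\tilde{x}_{k-1}$ in $\mathbb{C}^n$ are right and left Jordan chains of $P$ at $\lambda$ if $\sum_{l=0}^j \frac{1}{l!}P^{(l)}(\lambda)x_{j-l}=0$ and $\sum_{l=0}^j \frac{1}{l!}\tilde{x}_{j-l}^*P^{(l)}(\lambda)=0$ for $j=0,\ldots,k-1$; the right (left) algebraic eigenspace of a set of nonlinear eigenvalues is the span of all right (left) nonlinear generalized eigenvectors (members of such chains) for all eigenvalues in the set. $\Gamma$ is a positively oriented, bounded, simple, closed contour not crossing any eigenvalue. The first companion linearization is the pencil $\mathcal{A} - z\mathcal{B}\in\mathbb{C}^{nd\times nd}$, written in $d\times d$ blocks of size $n\times n$: $\mathcal{A}$ has identity blocks $I$ on the first block superdiagonal in its first $d-1$ block rows, zeros elsewhere in those rows, and last block row $[A_0, A_1, \ldots, A_{d-1}]$; $\mathcal{B}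 = \mathrm{diag}(I, \ldots, I, -A_d)$. Let $F = [I\ 0\ \cdots\ 0]\in\mathbb{C}^{n\times nd}$ and $L = [0\ \cdots\ 0\ I]\in\mathbb{C}^{n\times nd}$ (compatible block partitioning). Let $\mathcal{E}$ and $\tilde{\mathcal{E}}$ denote the right and left algebraic eigenspaces of the linear pencil $z\mathcal{B}-\mathcal{A}$ associated to its eigenvalues enclosed within $\Gamma$, i.e. the ranges of the Riesz projections $\frac{1}{2\pi i}\oint_\Gamma (z\mathcal{B}-\mathcal{A})^{-1}\mathcal{B}\,dz$ and $\frac{1}{2\pi i}\oint_\Gamma (z\mathcal{B}-\mathcal{A})^{-*}\mathcal{B}^*\,dz$. For a matrix $M$ and subspace $Z$, $MZ=\{Mz: z\in Z\}$. *)

theory Defs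
  imports "HOL-Complex_Analysis.Complex_Analysis" "Jordan_Normal_Form.Determinant"
begin

text \<open>A matrix polynomial of size n and degree (at most) d is given by its coefficient
  matrices C 0, ..., C d (each n x n).  Evaluation P(z) = sum_j z^j C_j.\<close>
definition mp_eval :: "nat \<Rightarrow> nat \<Rightarrow> (nat \<Rightarrow> complex mat) \<Rightarrow> complex \<Rightarrow> complex mat" where
  "mp_eval n d C z = mat n n (\<lambda>(a,b). \<Sum>j\<le>d. z ^ j * C j $$ (a,b))"

definition mp_deriv :: "nat \<Rightarrow> nat \<Rightarrow> (nat \<Rightarrow> complex mat) \<Rightarrow> nat \<Rightarrow> complex \<Rightarrow> complex mat" where
  "mp_deriv n d C l z = mat n n (\<lambda>(a,b). \<Sum>j\<in>{l..d}. of_nat (fact j div fact (j - l)) * z ^ (j - l) * C j $$ (a,b))"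

definition right_jordan_chain ::
  "nat \<Rightarrow> nat \<Rightarrow> (nat \<Rightarrow> complex mat) \<Rightarrow> complex \<Rightarrow> nat \<Rightarrow> (nat \<Rightarrow> complex vec) \<Rightarrow> bool" where
  "right_jordan_chain n d C lam k x \<longleftrightarrow>
     (\<forall>j<k. x j \<in> carrier_vec n) \<and>
     (\<forall>j<k. (\<forall>a<n. (\<Sum>l\<le>j. (1 / fact l) * (\<Sum>b<n. mp_deriv n d C l lam $$ (a,b) * x (j - l) $ b)) = 0))"

definition left_jordan_chain ::
  "nat \<Rightarrow> nat \<Rightarrow> (nat \<Rightarrow> complex mat) \<Rightarrow> complex \<Rightarrow> nat \<Rightarrow> (nat \<Rightarrow> complex vec) \<Rightarrow> bool" where
  "left_jordan_chain n d C lam k x \<longleftrightarrow>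
     (\<forall>j<k. x j \<in> carrier_vec n) \<and>
     (\<forall>j<k. (\<forall>b<n. (\<Sum>l\<le>j. (1 / fact l) * (\<Sum>a<n. cnj (x (j - l) $ a) * mp_deriv n d C l lam $$ (a,b))) = 0))"

definition cspan :: "nat \<Rightarrow> complex vec set \<Rightarrow> complex vec set" where
  "cspan n S = {v. \<exists>m (c :: nat \<Rightarrow> complex) w. (\<forall>i<m. w i \<in> S) \<and>
                    v = vec n (\<lambda>a. \<Sum>i<m. c i * w i $ a)}"

text \<open>Nonlinear eigenvalue: P(lam) is singular (equivalently, nontrivial left/right null vectors exist).\<close>
definition mp_eigenvalue :: "nat \<Rightarrow> nat \<Rightarrow> (nat \<Rightarrow> complex mat) \<Rightarrow> complex \<Rightarrow> bool" where
  "mp_eigenvalue n d C lam \<longleftrightarrow>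
     (\<exists>x \<in> carrier_vec n. x \<noteq> 0\<^sub>v n \<and> mp_eval n d C lam *\<^sub>v x = 0\<^sub>v n) \<and>
     (\<exists>y \<in> carrier_vec n. y \<noteq> 0\<^sub>v n \<and> (mp_eval n d C lam)\<^sup>T *\<^sub>v conjugate y = 0\<^sub>v n)"

definition right_alg_eigenspace :: "nat \<Rightarrow> nat \<Rightarrow> (nat \<Rightarrow> complex mat) \<Rightarrow> complex set \<Rightarrow> complex vec set" where
  "right_alg_eigenspace n d C Z = cspan n
     {v. \<exists>lam k x i. lam \<in> Z \<and> mp_eigenvalue n d C lam \<and> right_jordan_chain n d C lam k x \<and> i < k \<and> v = x i}"

definition left_alg_eigenspace :: "nat \<Rightarrow> nat \<Rightarrow> (nat \<Rightarrow> complex mat) \<Rightarrow> complex set \<Rightarrow> complex vec set" where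
  "left_alg_eigenspace n d C Z = cspan n
     {v. \<exists>lam k x i. lam \<in> Z \<and> mp_eigenvalue n d C lam \<and> left_jordan_chain n d C lam k x \<and> i < k \<and> v = x i}"

definition enclosed_by :: "(real \<Rightarrow> complex) \<Rightarrow> complex set" where
  "enclosed_by g = {z. z \<notin> path_image g \<and> winding_number g z = 1}"

text \<open>First companion linearization A - zB (size nd), indices i = r*n + a (block row r, offset a).\<close>
definition comp_A :: "nat \<Rightarrow> nat \<Rightarrow> (nat \<Rightarrow> complex mat) \<Rightarrow> complex mat" where
  "comp_A n d A = mat (n*d) (n*d) (\<lambda>(i,k).
     let r = i div n; a = i mod n; c = k div n; b = k mod n in
     if r + 1 < d then (if c = r + 1 \<and> a = b then 1 else 0)
     else A c $$ (a,b))"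

definition comp_B :: "nat \<Rightarrow> nat \<Rightarrow> (nat \<Rightarrow> complex mat) \<Rightarrow> complex mat" where
  "comp_B n d A = mat (n*d) (n*d) (\<lambda>(i,k).
     let r = i div n; a = i mod n; c = k div n; b = k mod n in
     if r + 1 < d then (if c = r \<and> a = b then 1 else 0)
     else (if c + 1 = d then - (A d $$ (a,b)) else 0))"

definition pencil_coeffs :: "complex mat \<Rightarrow> complex mat \<Rightarrow> nat \<Rightarrow> complex mat" where
  "pencil_coeffs AA BB j = (if j = 0 then - AA else BB)"

definition sel_first :: "nat \<Rightarrow> nat \<Rightarrow> complex mat" where
  "sel_first n d = mat n (n*d) (\<lambda>(a,k). if k = a then 1 else 0)"

definition sel_last :: "nat \<Rightarrow> nat \<Rightarrow> complex mat" where
  "sel_last n d = mat n (n*d) (\<lambda>(a,k). if k = (d - 1) * n + a then 1 else 0)"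

end

theory Submission
  imports Defs
begin


lemma sum_blocks: "(\<Sum>i<n*(d::nat). f i) = (\<Sum>r<d. \<Sum>a<n. f (r*n+a)) "
proof (induction d)
  case 0 then show ?case by simp
next
  case (Suc d)
  have eq: "{..<n * Suc d} = {..<n*d} \<union> {n*d..<n*d+n}" by auto
  have "(\<Sum>i<n*Suc d. f i) = sum f ({..<n*d} \<union> {n*d..<n*d+n})" by (simp only: eq)
  also have "\<dots> = (\<Sum>i<n*d. f i) + (\<Sum>i\<in>{n*d..<n*d+n}. f i)"
    by (rule sum.union_disjoint) auto
  finally have "(\<Sum>i<n*Suc d. f i) = (\<Sum>i<n*d. f i) + (\<Sum>i\<in>{n*d..<n*d+n}. f i)" .
  also have "(\<Sum>i\<in>{n*d..<n*d+n}. f i) = (\<Sum>i\<in>{0+d*n..<n+d*n}. f i)"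
    by (simp add: mult.commute add.commute)
  also have "\<dots> = (\<Sum>a\<in>{0..<n}. f (a+d*n))" by (rule sum.shift_bounds_nat_ivl)
  also have "\<dots> = (\<Sum>a<n. f (d*n+a))" by (simp add: lessThan_atLeast0 add.commute)
  finally show ?case using Suc by simp
qed

definition conv :: "(nat \<Rightarrow> complex) \<Rightarrow> (nat \<Rightarrow> complex) \<Rightarrow> nat \<Rightarrow> complex" where
  "conv f X j = (\<Sum>m\<le>j. f m * X (j - m))"

lemma conv_rec:
  "conv (\<lambda>m. lam * g m + (if m = 0 then e else h (m - 1))) X j =
   lam * conv g X j + e * X j + (if j = 0 then 0 else conv h X (j - 1))"
proof (cases j)
  case 0 then show ?thesis by (simp add: conv_def algebra_simps)
next
  case (Suc j')
  have "conv (\<lambda>m. lam * g m + (if m = 0 then e else h (m - 1))) X j =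
     lam * conv g X j + (\<Sum>m\<le>j. (if m = 0 then e else h (m - 1)) * X (j - m))"
    by (simp add: conv_def algebra_simps sum.distrib sum_distrib_left)
  also have "(\<Sum>m\<le>j. (if m = 0 then e else h (m - 1)) * X (j - m)) = e * X j + conv h X j'"
    unfolding Suc conv_def by (subst sum.atMost_Suc_shift) simp
  finally show ?thesis using Suc by simp
qed

definition coef :: "complex \<Rightarrow> nat \<Rightarrow> nat \<Rightarrow> complex" where
  "coef lam r m = of_nat (r choose m) * lam ^ (r - m)"

lemma coef_0: "coef lam 0 m = (if m = 0 then 1 else 0)"
  by (simp add: coef_def)

lemma coef_Suc: "coef lam (Suc r) m = lam * coef lam r m + (if m = 0 then 0 else coef lam r (m - 1))"
proof (cases m)
  case 0 then show ?thesis by (simp add: coef_def)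
next
  case (Suc m')
  show ?thesis
  proof (cases "Suc m' \<le> r")
    case True
    then have "lam ^ (r - m') = lam * lam ^ (r - Suc m')"
      by (metis Suc_diff_le diff_Suc_Suc power_Suc)
    then show ?thesis using Suc by (simp add: coef_def algebra_simps)
  next
    case False
    then have "r choose Suc m' = 0" by simp
    then show ?thesis using Suc by (simp add: coef_def algebra_simps)
  qed
qed

definition T :: "complex \<Rightarrow> (nat \<Rightarrow> nat \<Rightarrow> complex) \<Rightarrow> nat \<Rightarrow> nat \<Rightarrow> nat \<Rightarrow> complex" where
  "T lam X r j a = conv (coef lam r) (\<lambda>t. X t a) j"

lemma T_0: "T lam X 0 j a = X j a"
proof -
  have "T lam X 0 j a = (\<Sum>m\<le>j. (if m = 0 then 1 else 0) * X (j - m) a)"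
    by (simp add: T_def conv_def coef_0)
  also have "\<dots> = (\<Sum>m\<le>j. if m = 0 then X j a else 0)" by (rule sum.cong) auto
  also have "\<dots> = X j a" by (simp add: sum.delta)
  finally show ?thesis .
qed

lemma T_Suc: "T lam X (Suc r) j a = lam * T lam X r j a + (if j = 0 then 0 else T lam X r (j - 1) a)"
proof -
  have "coef lam (Suc r) = (\<lambda>m. lam * coef lam r m + (if m = 0 then 0 else coef lam r (m - 1)))"
    using coef_Suc by blast
  then show ?thesis unfolding T_def using conv_rec[of lam "coef lam r" 0 "coef lam r"] by simp
qed

definition K :: "complex \<Rightarrow> nat \<Rightarrow> nat \<Rightarrow> nat \<Rightarrow> complex" where
  "K lam c m i = (if c \<le> i then coef lam (i - c) m else 0)"

lemma K_rec: "K lam c m i = lam * K lam (Suc c) m i + (if m = 0 then (if i = c then 1 else 0) else K lam (Suc c) (m - 1) i)"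
proof -
  consider "i < c" | "i = c" | "c < i" by linarith
  then show ?thesis
  proof cases
    case 3
    then have "i - c = Suc (i - Suc c)" by simp
    then show ?thesis using 3 by (simp add: K_def coef_Suc)
  qed (auto simp: K_def coef_0)
qed

definition H :: "complex \<Rightarrow> nat \<Rightarrow> (nat \<Rightarrow> complex mat) \<Rightarrow> nat \<Rightarrow> (nat \<Rightarrow> nat \<Rightarrow> complex) \<Rightarrow> nat \<Rightarrow> nat \<Rightarrow> nat \<Rightarrow> complex" where
  "H lam d A n Y c j b = (\<Sum>i\<le>d. conv (\<lambda>m. K lam c m i) (\<lambda>t. \<Sum>a<n. Y t a * A i $$ (a,b)) j)"

lemma H_rec: assumes "c \<le> d"
  shows "H lam d A n Y c j b = lam * H lam d A n Y (Suc c) j b + (\<Sum>a<n. Y j a * A c $$ (a,b))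
     + (if j = 0 then 0 else H lam d A n Y (Suc c) (j - 1) b)"
proof -
  have e: "conv (\<lambda>m. K lam c m i) Z j = lam * conv (\<lambda>m. K lam (Suc c) m i) Z j
     + (if i = c then Z j else 0) + (if j = 0 then 0 else conv (\<lambda>m. K lam (Suc c) m i) Z (j - 1))" for i Z
  proof -
    have "(\<lambda>m. K lam c m i) = (\<lambda>m. lam * K lam (Suc c) m i + (if m = 0 then (if i = c then 1 else 0) else K lam (Suc c) (m - 1) i))"
      using K_rec by blast
    then show ?thesis
      using conv_rec[of lam "\<lambda>m. K lam (Suc c) m i" "if i = c then 1 else 0" "\<lambda>m. K lam (Suc c) m i" Z j] by simp
  qed
  have "H lam d A n Y c j b = (\<Sum>i\<le>d. lam * conv (\<lambda>m. K lam (Suc c) m i) (\<lambda>t. \<Sum>a<n. Y t a * A i $$ (a,b)) j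
     + (if i = c then (\<Sum>a<n. Y j a * A i $$ (a,b)) else 0)
     + (if j = 0 then 0 else conv (\<lambda>m. K lam (Suc c) m i) (\<lambda>t. \<Sum>a<n. Y t a * A i $$ (a,b)) (j - 1)))"
    unfolding H_def e by simp
  also have "\<dots> = lam * H lam d A n Y (Suc c) j b + (\<Sum>a<n. Y j a * A c $$ (a,b))
     + (if j = 0 then 0 else H lam d A n Y (Suc c) (j - 1) b)"
    using assms by (simp add: H_def sum.distrib sum_distrib_left sum.delta cong: if_cong)
  finally show ?thesis .
qed

lemma H_Suc_d: "H lam d A n Y (Suc d) j b = 0"
  by (simp add: H_def K_def conv_def)

lemma H_d: "H lam d A n Y d j b = (\<Sum>a<n. Y j a * A d $$ (a,b))"
  using H_rec[of d d lam A n Y j b] by (simp add: H_Suc_d)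

lemma H_zero: assumes "\<And>t a. Y t a = 0" shows "H lam d A n Y c j b = 0"
  by (simp add: H_def conv_def assms)

definition Q :: "complex \<Rightarrow> nat \<Rightarrow> (nat \<Rightarrow> complex mat) \<Rightarrow> nat \<Rightarrow> nat \<Rightarrow> nat \<Rightarrow> complex" where
  "Q lam d A l a b = (\<Sum>i\<le>d. coef lam i l * A i $$ (a,b))"

lemma T_Q: "(\<Sum>c\<le>d. \<Sum>b<n. A c $$ (a,b) * T lam X c j b) = (\<Sum>l\<le>j. \<Sum>b<n. Q lam d A l a b * X (j - l) b)"
proof -
  have "(\<Sum>c\<le>d. \<Sum>b<n. A c $$ (a,b) * T lam X c j b) = (\<Sum>c\<le>d. \<Sum>b<n. \<Sum>l\<le>j. coef lam c l * A c $$ (a,b) * X (j - l) b)"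
    unfolding T_def conv_def by (simp add: sum_distrib_left mult.assoc mult.left_commute)
  also have "\<dots> = (\<Sum>c\<le>d. \<Sum>l\<le>j. \<Sum>b<n. coef lam c l * A c $$ (a,b) * X (j - l) b)"
    by (rule sum.cong[OF refl], rule sum.swap)
  also have "\<dots> = (\<Sum>l\<le>j. \<Sum>c\<le>d. \<Sum>b<n. coef lam c l * A c $$ (a,b) * X (j - l) b)"
    by (rule sum.swap)
  also have "\<dots> = (\<Sum>l\<le>j. \<Sum>b<n. \<Sum>c\<le>d. coef lam c l * A c $$ (a,b) * X (j - l) b)"
    by (rule sum.cong[OF refl], rule sum.swap)
  also have "\<dots> = (\<Sum>l\<le>j. \<Sum>b<n. Q lam d A l a b * X (j - l) b)"
    unfolding Q_def by (simp add: sum_distrib_right)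
  finally show ?thesis .
qed

lemma H0_Q: "H lam d A n Y 0 j b = (\<Sum>l\<le>j. \<Sum>a<n. Y (j - l) a * Q lam d A l a b)"
proof -
  have "H lam d A n Y 0 j b = (\<Sum>i\<le>d. \<Sum>l\<le>j. \<Sum>a<n. coef lam i l * Y (j - l) a * A i $$ (a,b))"
    unfolding H_def conv_def K_def by (simp add: sum_distrib_left mult.assoc mult.left_commute)
  also have "\<dots> = (\<Sum>l\<le>j. \<Sum>i\<le>d. \<Sum>a<n. coef lam i l * Y (j - l) a * A i $$ (a,b))"
    by (rule sum.swap)
  also have "\<dots> = (\<Sum>l\<le>j. \<Sum>a<n. \<Sum>i\<le>d. coef lam i l * Y (j - l) a * A i $$ (a,b))"
    by (rule sum.cong[OF refl], rule sum.swap)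
  also have "\<dots> = (\<Sum>l\<le>j. \<Sum>a<n. Y (j - l) a * Q lam d A l a b)"
    unfolding Q_def by (simp add: sum_distrib_left mult.assoc mult.left_commute)
  finally show ?thesis .
qed

lemma mult_vec_sum: assumes "M \<in> carrier_mat m N" "v \<in> carrier_vec N" "a < m"
  shows "(M *\<^sub>v v) $ a = (\<Sum>k<N. M $$ (a,k) * v $ k)"
  using assms by (auto simp: scalar_prod_def lessThan_atLeast0 intro!: sum.cong)

definition cvec :: "nat \<Rightarrow> nat \<Rightarrow> (nat \<Rightarrow> complex) \<Rightarrow> (nat \<Rightarrow> complex vec) \<Rightarrow> complex vec" where
  "cvec N m c w = vec N (\<lambda>a. \<Sum>i<m. c i * w i $ a)"

lemma cspan_alt: "cspan N S = {v. \<exists>m c w. (\<forall>i<m. w i \<in> S) \<and> v = cvec N m c w}"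
  unfolding cspan_def cvec_def by simp

lemma mult_cvec: assumes "M \<in> carrier_mat m N" "\<forall>i<k. w i \<in> carrier_vec N"
  shows "M *\<^sub>v cvec N k c w = cvec m k c (\<lambda>i. M *\<^sub>v w i)"
proof (rule eq_vecI)
  show "dim_vec (M *\<^sub>v cvec N k c w) = dim_vec (cvec m k c (\<lambda>i. M *\<^sub>v w i))"
    using assms by (simp add: cvec_def)
next
  fix a assume "a < dim_vec (cvec m k c (\<lambda>i. M *\<^sub>v w i))"
  then have a: "a < m" by (simp add: cvec_def)
  have "(M *\<^sub>v cvec N k c w) $ a = (\<Sum>b<N. M $$ (a,b) * (\<Sum>i<k. c i * w i $ b))"
    using assms a by (subst mult_vec_sum[of M m N]) (auto simp: cvec_def)
  also have "\<dots> = (\<Sum>i<k. c i * (\<Sum>b<N. M $$ (a,b) * w i $ b))"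
    by (simp add: sum_distrib_left mult.left_commute sum.swap[of _ "{..<N}"])
  also have "\<dots> = cvec m k c (\<lambda>i. M *\<^sub>v w i) $ a"
  proof -
    have "\<forall>i<k. (M *\<^sub>v w i) $ a = (\<Sum>b<N. M $$ (a,b) * w i $ b)"
      using mult_vec_sum[OF assms(1) _ a] assms(2) by blast
    then show ?thesis using a by (simp add: cvec_def)
  qed
  finally show "(M *\<^sub>v cvec N k c w) $ a = cvec m k c (\<lambda>i. M *\<^sub>v w i) $ a" .
qed

lemma cspan_image: assumes "M \<in> carrier_mat m N" "S \<subseteq> carrier_vec N"
  shows "(\<lambda>y. M *\<^sub>v y) ` cspan N S = cspan m ((\<lambda>y. M *\<^sub>v y) ` S)"
proof
  show "(\<lambda>y. M *\<^sub>v y) ` cspan N S \<subseteq> cspan m ((\<lambda>y. M *\<^sub>v y) ` S)"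
  proof
    fix u assume "u \<in> (\<lambda>y. M *\<^sub>v y) ` cspan N S"
    then obtain k c w where w: "\<forall>i<k. w i \<in> S" and u: "u = M *\<^sub>v cvec N k c w"
      unfolding cspan_alt by auto
    have "u = cvec m k c (\<lambda>i. M *\<^sub>v w i)" using u mult_cvec[OF assms(1)] w assms(2) by blast
    then show "u \<in> cspan m ((\<lambda>y. M *\<^sub>v y) ` S)" unfolding cspan_alt using w
      by (auto intro!: exI[of _ k] exI[of _ c] exI[of _ "\<lambda>i. M *\<^sub>v w i"])
  qed
next
  show "cspan m ((\<lambda>y. M *\<^sub>v y) ` S) \<subseteq> (\<lambda>y. M *\<^sub>v y) ` cspan N S"
  proof
    fix u assume "u \<in> cspan m ((\<lambda>y. M *\<^sub>v y) ` S)"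
    then obtain k c w' where w': "\<forall>i<k. w' i \<in> (\<lambda>y. M *\<^sub>v y) ` S" and u: "u = cvec m k c w'"
      unfolding cspan_alt by auto
    have "\<forall>i. \<exists>y. i < k \<longrightarrow> y \<in> S \<and> w' i = M *\<^sub>v y" using w' by blast
    then obtain w where w: "\<And>i. i < k \<Longrightarrow> w i \<in> S \<and> w' i = M *\<^sub>v w i" by metis
    have "cvec m k c w' = cvec m k c (\<lambda>i. M *\<^sub>v w i)"
      unfolding cvec_def using w by (intro eq_vecI) auto
    also have "\<dots> = M *\<^sub>v cvec N k c w"
    proof -
      have wc: "\<forall>i<k. w i \<in> carrier_vec N" using w assms(2) by blast
      show ?thesis using mult_cvec[OF assms(1) wc] by simp
    qed
    finally have "u = M *\<^sub>v cvec N k c w" using u by simp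
    moreover have "cvec N k c w \<in> cspan N S" unfolding cspan_alt using w by blast
    ultimately show "u \<in> (\<lambda>y. M *\<^sub>v y) ` cspan N S" by blast
  qed
qed

lemma fact_div_binom: "l \<le> i \<Longrightarrow> fact i div fact (i - l) = fact l * (i choose l :: nat)"
  by (metis binomial_fact_lemma mult.commute nonzero_mult_div_cancel_left fact_nonzero mult.assoc)

lemma deriv_Q: assumes "a < n" "b < n"
  shows "(1 / fact l) * mp_deriv n d C l z $$ (a,b) = Q z d C l a b"
proof -
  have "(1 / fact l) * mp_deriv n d C l z $$ (a,b) = (\<Sum>i\<in>{l..d}. coef z i l * C i $$ (a,b))"
    unfolding mp_deriv_def using assms
    by (auto simp: sum_distrib_left coef_def fact_div_binom intro!: sum.cong)
  also have "\<dots> = Q z d C l a b"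
    unfolding Q_def by (rule sum.mono_neutral_left) (auto simp: coef_def)
  finally show ?thesis .
qed

lemma right_chain_Q: "right_jordan_chain n d C lam k x \<longleftrightarrow> (\<forall>j<k. x j \<in> carrier_vec n) \<and>
   (\<forall>j<k. \<forall>a<n. (\<Sum>l\<le>j. \<Sum>b<n. Q lam d C l a b * x (j - l) $ b) = 0)"
proof -
  have "(1 / fact l) * (\<Sum>b<n. mp_deriv n d C l lam $$ (a,b) * y $ b) = (\<Sum>b<n. Q lam d C l a b * y $ b)"
    if "a < n" for a l and y :: "complex vec"
    using that by (simp add: sum_distrib_left deriv_Q[symmetric] mult.assoc)
  then show ?thesis unfolding right_jordan_chain_def by simp
qed

lemma left_chain_Q: "left_jordan_chain n d C lam k x \<longleftrightarrow> (\<forall>j<k. x j \<in> carrier_vec n) \<and>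
   (\<forall>j<k. \<forall>b<n. (\<Sum>l\<le>j. \<Sum>a<n. cnj (x (j - l) $ a) * Q lam d C l a b) = 0)"
proof -
  have "(1 / fact l) * (\<Sum>a<n. cnj (y $ a) * mp_deriv n d C l lam $$ (a,b)) = (\<Sum>a<n. cnj (y $ a) * Q lam d C l a b)"
    if "b < n" for b l and y :: "complex vec"
    using that by (simp add: sum_distrib_left deriv_Q[symmetric] mult.left_commute)
  then show ?thesis unfolding left_jordan_chain_def by simp
qed

lemma sum_upto_1: fixes f :: "nat \<Rightarrow> complex" assumes "\<And>l. l \<ge> 2 \<Longrightarrow> f l = 0"
  shows "(\<Sum>l\<le>j. f l) = f 0 + (if j = 0 then 0 else f 1)"
proof (cases j)
  case (Suc j')
  have "(\<Sum>l\<le>j'. f (Suc l)) = f 1"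
  proof (cases j')
    case (Suc j'')
    then show ?thesis using assms by (simp add: sum.atMost_Suc_shift del: sum.atMost_Suc)
  qed simp
  then show ?thesis using Suc by (simp add: sum.atMost_Suc_shift del: sum.atMost_Suc)
qed simp

lemma Q_pencil: assumes "AA \<in> carrier_mat N N" "BB \<in> carrier_mat N N" "i < N" "b < N"
  shows "Q lam (Suc 0) (pencil_coeffs AA BB) l i b =
    (if l = 0 then lam * BB $$ (i,b) - AA $$ (i,b) else if l = 1 then BB $$ (i,b) else 0)"
  using assms by (simp add: Q_def pencil_coeffs_def coef_def binomial_eq_0)

lemma blk_div[simp]: "a < (n::nat) \<Longrightarrow> (r*n+a) div n = r"
proof -
  assume "a < n"
  then have "n \<noteq> 0" by simp
  then show ?thesis using \<open>a < n\<close> by (simp add: add.commute[of "r*n" a])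
qed

lemma sum_delta_outer: "(c::nat) < d \<Longrightarrow> (\<Sum>r<d. \<Sum>a<(n::nat). if r = c then f r a else (0::complex)) = (\<Sum>a<n. f c a)"
proof -
  assume "c < d"
  have "(\<Sum>r<d. \<Sum>a<(n::nat). if r = c then f r a else (0::complex)) = (\<Sum>r<d. if r = c then (\<Sum>a<n. f r a) else 0)"
    by (intro sum.cong) auto
  also have "\<dots> = (\<Sum>a<n. f c a)" using \<open>c<d\<close> by (simp add: sum.delta)
  finally show ?thesis .
qed
lemma blk_mod[simp]: "a < (n::nat) \<Longrightarrow> (r*n+a) mod n = a"
  by simp
lemma blk_lt: "r < d \<Longrightarrow> a < n \<Longrightarrow> r*n+a < n*(d::nat)"
proof -
  assume "r < d" "a < n"
  then have "r*n+a < r*n+n" by simp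
  also have "\<dots> = (r+1)*n" by simp
  also have "\<dots> \<le> d*n" using \<open>r<d\<close> by (intro mult_right_mono) auto
  finally show ?thesis by (simp add: mult.commute)
qed

lemma compB_entry: assumes "r < d" "a < n" "c < d" "b < n"
  shows "comp_B n d A $$ (r*n+a, c*n+b) = (if r+1<d then (if c=r \<and> a=b then 1 else 0) else (if c+1=d then -(A d $$ (a,b)) else 0))"
  using assms blk_lt[OF assms(1,2)] blk_lt[OF assms(3,4)] by (simp add: comp_B_def Let_def)

lemma compA_entry: assumes "r < d" "a < n" "c < d" "b < n"
  shows "comp_A n d A $$ (r*n+a, c*n+b) = (if r+1<d then (if c=r+1 \<and> a=b then 1 else 0) else A c $$ (a,b))"
  using assms blk_lt[OF assms(1,2)] blk_lt[OF assms(3,4)] by (simp add: comp_A_def Let_def)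

lemma sum_delta2: "(c::nat) < d \<Longrightarrow> a < (n::nat) \<Longrightarrow>
   (\<Sum>r<d. \<Sum>b<n. (if r = c \<and> b = a then f r b else (0::complex))) = f c a"
proof -
  assume "c < d" "a < n"
  have "(\<Sum>r<d. \<Sum>b<n. (if r = c \<and> b = a then f r b else 0)) = (\<Sum>r<d. if r = c then f r a else 0)"
    using \<open>a<n\<close> by (intro sum.cong) (auto simp: sum.delta)
  also have "\<dots> = f c a" using \<open>c<d\<close> by (simp add: sum.delta)
  finally show ?thesis .
qed

lemma sumB_right: assumes "r < d" "a < n"
  shows "(\<Sum>b<n*d. comp_B n d A $$ (r*n+a, b) * u b) =
    (if r+1<d then u (r*n+a) else - (\<Sum>b<n. A d $$ (a,b) * u ((d-1)*n+b)))"
proof (cases "r+1<d")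
  case True
  have "(\<Sum>b<n*d. comp_B n d A $$ (r*n+a, b) * u b) = (\<Sum>c<d. \<Sum>b<n. comp_B n d A $$ (r*n+a, c*n+b) * u (c*n+b))"
    by (rule sum_blocks)
  also have "\<dots> = (\<Sum>c<d. \<Sum>b<n. if c = r \<and> b = a then u (c*n+b) else 0)"
    using assms True by (intro sum.cong refl) (auto simp: compB_entry)
  also have "\<dots> = u (r*n+a)" using assms by (rule sum_delta2)
  finally show ?thesis using True by simp
next
  case False
  then have rd: "r = d - 1" using assms by simp
  have "(\<Sum>b<n*d. comp_B n d A $$ (r*n+a, b) * u b) = (\<Sum>c<d. \<Sum>b<n. comp_B n d A $$ (r*n+a, c*n+b) * u (c*n+b))"
    by (rule sum_blocks)
  also have "\<dots> = (\<Sum>c<d. \<Sum>b<n. if c = d - 1 then - A d $$ (a,b) * u (c*n+b) else 0)"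
    using assms False by (intro sum.cong refl) (auto simp: compB_entry)
  also have "\<dots> = - (\<Sum>b<n. A d $$ (a,b) * u ((d-1)*n+b))"
    using assms by (subst sum_delta_outer) (auto simp: sum_negf)
  finally show ?thesis using False by simp
qed

lemma sumA_right: assumes "r < d" "a < n"
  shows "(\<Sum>b<n*d. comp_A n d A $$ (r*n+a, b) * u b) =
    (if r+1<d then u ((r+1)*n+a) else (\<Sum>c<d. \<Sum>b<n. A c $$ (a,b) * u (c*n+b)))"
proof (cases "r+1<d")
  case True
  have "(\<Sum>b<n*d. comp_A n d A $$ (r*n+a, b) * u b) = (\<Sum>c<d. \<Sum>b<n. comp_A n d A $$ (r*n+a, c*n+b) * u (c*n+b))"
    by (rule sum_blocks)
  also have "\<dots> = (\<Sum>c<d. \<Sum>b<n. if c = r+1 \<and> b = a then u (c*n+b) else 0)"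
    using assms True by (intro sum.cong refl) (auto simp: compA_entry)
  also have "\<dots> = u ((r+1)*n+a)" using assms True by (intro sum_delta2) auto
  finally show ?thesis using True by simp
next
  case False
  have "(\<Sum>b<n*d. comp_A n d A $$ (r*n+a, b) * u b) = (\<Sum>c<d. \<Sum>b<n. comp_A n d A $$ (r*n+a, c*n+b) * u (c*n+b))"
    by (rule sum_blocks)
  also have "\<dots> = (\<Sum>c<d. \<Sum>b<n. A c $$ (a,b) * u (c*n+b))"
    using assms False by (intro sum.cong refl) (auto simp: compA_entry)
  finally show ?thesis using False by simp
qed

lemma sumB_left: assumes "c < d" "b < n"
  shows "(\<Sum>i<n*d. u i * comp_B n d A $$ (i, c*n+b)) =
    (if c+1<d then u (c*n+b) else - (\<Sum>a<n. u ((d-1)*n+a) * A d $$ (a,b)))"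
proof (cases "c+1<d")
  case True
  have "(\<Sum>i<n*d. u i * comp_B n d A $$ (i, c*n+b)) = (\<Sum>r<d. \<Sum>a<n. u (r*n+a) * comp_B n d A $$ (r*n+a, c*n+b))"
    by (rule sum_blocks)
  also have "\<dots> = (\<Sum>r<d. \<Sum>a<n. (if r = c \<and> a = b then u (r*n+a) else 0))"
    using assms True by (intro sum.cong refl) (auto simp: compB_entry)
  also have "\<dots> = u (c*n+b)" using assms by (rule sum_delta2)
  finally show ?thesis using True by simp
next
  case False
  have "(\<Sum>i<n*d. u i * comp_B n d A $$ (i, c*n+b)) = (\<Sum>r<d. \<Sum>a<n. u (r*n+a) * comp_B n d A $$ (r*n+a, c*n+b))"
    by (rule sum_blocks)
  also have "\<dots> = (\<Sum>r<d. \<Sum>a<n. (if r = d - 1 then - (u (r*n+a) * A d $$ (a,b)) else 0))"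
    using assms False by (intro sum.cong refl) (auto simp: compB_entry)
  also have "\<dots> = - (\<Sum>a<n. u ((d-1)*n+a) * A d $$ (a,b))"
    using assms by (subst sum_delta_outer) (auto simp: sum_negf)
  finally show ?thesis using False by simp
qed

lemma sumA_left: assumes "c < d" "b < n"
  shows "(\<Sum>i<n*d. u i * comp_A n d A $$ (i, c*n+b)) =
    (if 1 \<le> c then u ((c-1)*n+b) else 0) + (\<Sum>a<n. u ((d-1)*n+a) * A c $$ (a,b))"
proof -
  have "(\<Sum>i<n*d. u i * comp_A n d A $$ (i, c*n+b)) = (\<Sum>r<d. \<Sum>a<n. u (r*n+a) * comp_A n d A $$ (r*n+a, c*n+b))"
    by (rule sum_blocks)
  also have "\<dots> = (\<Sum>r<d. \<Sum>a<n. (if r = c - 1 \<and> a = b then (if 1 \<le> c then u (r*n+a) else 0) else 0)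
      + (if r = d - 1 then u (r*n+a) * A c $$ (a,b) else 0))"
    using assms by (intro sum.cong refl) (auto simp: compA_entry)
  also have "\<dots> = (\<Sum>r<d. \<Sum>a<n. (if r = c - 1 \<and> a = b then (if 1 \<le> c then u (r*n+a) else 0) else 0))
      + (\<Sum>r<d. \<Sum>a<n. if r = d - 1 then u (r*n+a) * A c $$ (a,b) else 0)"
    by (simp only: sum.distrib)
  also have "\<dots> = (if 1 \<le> c then u ((c-1)*n+b) else 0) + (\<Sum>a<n. u ((d-1)*n+a) * A c $$ (a,b))"
    using assms by (subst sum_delta2, simp, simp, subst sum_delta_outer) auto
  finally show ?thesis .
qed




lemma comp_carrier: "comp_A n d A \<in> carrier_mat (n*d) (n*d)" "comp_B n d A \<in> carrier_mat (n*d) (n*d)"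
  by (auto simp: comp_A_def comp_B_def)

definition Bs :: "nat \<Rightarrow> nat \<Rightarrow> (nat \<Rightarrow> complex mat) \<Rightarrow> nat \<Rightarrow> nat \<Rightarrow> (nat \<Rightarrow> complex) \<Rightarrow> complex" where
  "Bs n d A r a u = (if r+1<d then u (r*n+a) else - (\<Sum>b<n. A d $$ (a,b) * u ((d-1)*n+b)))"
definition As :: "nat \<Rightarrow> nat \<Rightarrow> (nat \<Rightarrow> complex mat) \<Rightarrow> nat \<Rightarrow> nat \<Rightarrow> (nat \<Rightarrow> complex) \<Rightarrow> complex" where
  "As n d A r a u = (if r+1<d then u ((r+1)*n+a) else (\<Sum>c<d. \<Sum>b<n. A c $$ (a,b) * u (c*n+b)))"
definition Bl :: "nat \<Rightarrow> nat \<Rightarrow> (nat \<Rightarrow> complex mat) \<Rightarrow> nat \<Rightarrow> nat \<Rightarrow> (nat \<Rightarrow> complex) \<Rightarrow> complex" where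
  "Bl n d A c b u = (if c+1<d then u (c*n+b) else - (\<Sum>a<n. u ((d-1)*n+a) * A d $$ (a,b)))"
definition Al :: "nat \<Rightarrow> nat \<Rightarrow> (nat \<Rightarrow> complex mat) \<Rightarrow> nat \<Rightarrow> nat \<Rightarrow> (nat \<Rightarrow> complex) \<Rightarrow> complex" where
  "Al n d A c b u = (if 1 \<le> c then u ((c-1)*n+b) else 0) + (\<Sum>a<n. u ((d-1)*n+a) * A c $$ (a,b))"

definition rblk where
  "rblk n d A lam k V \<longleftrightarrow> (\<forall>j<k. \<forall>r<d. \<forall>a<n.
     lam * Bs n d A r a (V j) - As n d A r a (V j) + (if j = 0 then 0 else Bs n d A r a (V (j-1))) = 0)"
definition lblk where
  "lblk n d A lam k U \<longleftrightarrow> (\<forall>j<k. \<forall>c<d. \<forall>b<n.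
     lam * Bl n d A c b (U j) - Al n d A c b (U j) + (if j = 0 then 0 else Bl n d A c b (U (j-1))) = 0)"

lemma all_blocks: "(\<forall>i<n*d. P i) \<longleftrightarrow> (\<forall>r<d. \<forall>a<n. P (r*n+(a::nat)))"
proof
  assume "\<forall>i<n*d. P i" then show "\<forall>r<d. \<forall>a<n. P (r*n+a)" using blk_lt by blast
next
  assume h: "\<forall>r<d. \<forall>a<n. P (r*n+(a::nat))"
  show "\<forall>i<n*d. P i"
  proof (intro allI impI)
    fix i assume i: "i < n*d"
    then have "n > 0" by (cases n) auto
    then have "i mod n < n" by simp
    moreover have "i div n < d" using i by (simp add: less_mult_imp_div_less mult.commute)
    ultimately have "P ((i div n)*n + i mod n)" using h by blast
    then show "P i" by simp
  qed
qed

lemma pencil_right_iff: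
  "right_jordan_chain (n*d) 1 (pencil_coeffs (comp_A n d A) (comp_B n d A)) lam k v \<longleftrightarrow>
   (\<forall>j<k. v j \<in> carrier_vec (n*d)) \<and> rblk n d A lam k (\<lambda>j i. v j $ i)"
proof -
  let ?AA = "comp_A n d A" and ?BB = "comp_B n d A"
  have e: "(\<Sum>l\<le>j. \<Sum>b<n*d. Q lam 1 (pencil_coeffs ?AA ?BB) l i b * v (j - l) $ b) =
     lam * Bs n d A r a (\<lambda>i. v j $ i) - As n d A r a (\<lambda>i. v j $ i) + (if j = 0 then 0 else Bs n d A r a (\<lambda>i. v (j-1) $ i))"
    if i: "i = r*n+a" "r < d" "a < n" for i j r a
  proof -
    have il: "i < n*d" using i blk_lt by blast
    have "(\<Sum>l\<le>j. \<Sum>b<n*d. Q lam 1 (pencil_coeffs ?AA ?BB) l i b * v (j - l) $ b) =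
      (\<Sum>b<n*d. (lam * ?BB $$ (i,b) - ?AA $$ (i,b)) * v j $ b) + (if j = 0 then 0 else (\<Sum>b<n*d. ?BB $$ (i,b) * v (j-1) $ b))"
      by (subst sum_upto_1) (auto simp: Q_pencil[OF comp_carrier il] intro!: sum.neutral sum.cong)
    also have "\<dots> = lam * (\<Sum>b<n*d. ?BB $$ (i,b) * v j $ b) - (\<Sum>b<n*d. ?AA $$ (i,b) * v j $ b)
       + (if j = 0 then 0 else (\<Sum>b<n*d. ?BB $$ (i,b) * v (j-1) $ b))"
      by (simp add: algebra_simps sum_subtractf sum_distrib_left)
    also have "\<dots> = lam * Bs n d A r a (\<lambda>i. v j $ i) - As n d A r a (\<lambda>i. v j $ i) + (if j = 0 then 0 else Bs n d A r a (\<lambda>i. v (j-1) $ i))"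
      unfolding i(1) sumB_right[OF i(2,3)] sumA_right[OF i(2,3)] Bs_def As_def by simp
    finally show ?thesis .
  qed
  have e2: "r < d \<Longrightarrow> a < n \<Longrightarrow> (\<Sum>l\<le>j. \<Sum>b<n*d. Q lam 1 (pencil_coeffs ?AA ?BB) l (r*n+a) b * v (j - l) $ b) =
     lam * Bs n d A r a (\<lambda>i. v j $ i) - As n d A r a (\<lambda>i. v j $ i) + (if j = 0 then 0 else Bs n d A r a (\<lambda>i. v (j-1) $ i))" for j r a
    using e by blast
  show ?thesis unfolding right_chain_Q rblk_def all_blocks by (simp only: e2 cong: imp_cong)
qed

lemma pencil_left_iff:
  "left_jordan_chain (n*d) 1 (pencil_coeffs (comp_A n d A) (comp_B n d A)) lam k w \<longleftrightarrow>
   (\<forall>j<k. w j \<in> carrier_vec (n*d)) \<and> lblk n d A lam k (\<lambda>j i. cnj (w j $ i))"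
proof -
  let ?AA = "comp_A n d A" and ?BB = "comp_B n d A"
  have e: "(\<Sum>l\<le>j. \<Sum>i<n*d. cnj (w (j - l) $ i) * Q lam 1 (pencil_coeffs ?AA ?BB) l i b') =
     lam * Bl n d A c b (\<lambda>i. cnj (w j $ i)) - Al n d A c b (\<lambda>i. cnj (w j $ i)) + (if j = 0 then 0 else Bl n d A c b (\<lambda>i. cnj (w (j-1) $ i)))"
    if i: "b' = c*n+b" "c < d" "b < n" for b' j c b
  proof -
    have il: "b' < n*d" using i blk_lt by blast
    have "(\<Sum>l\<le>j. \<Sum>i<n*d. cnj (w (j - l) $ i) * Q lam 1 (pencil_coeffs ?AA ?BB) l i b') =
      (\<Sum>i<n*d. cnj (w j $ i) * (lam * ?BB $$ (i,b') - ?AA $$ (i,b'))) + (if j = 0 then 0 else (\<Sum>i<n*d. cnj (w (j-1) $ i) * ?BB $$ (i,b')))"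
      by (subst sum_upto_1) (auto simp: Q_pencil[OF comp_carrier _ il] intro!: sum.neutral sum.cong)
    also have "\<dots> = lam * (\<Sum>i<n*d. cnj (w j $ i) * ?BB $$ (i,b')) - (\<Sum>i<n*d. cnj (w j $ i) * ?AA $$ (i,b'))
       + (if j = 0 then 0 else (\<Sum>i<n*d. cnj (w (j-1) $ i) * ?BB $$ (i,b')))"
      by (simp add: algebra_simps sum_subtractf sum_distrib_left)
    also have "\<dots> = lam * Bl n d A c b (\<lambda>i. cnj (w j $ i)) - Al n d A c b (\<lambda>i. cnj (w j $ i)) + (if j = 0 then 0 else Bl n d A c b (\<lambda>i. cnj (w (j-1) $ i)))"
      unfolding i(1) sumB_left[OF i(2,3)] sumA_left[OF i(2,3)] Bl_def Al_def by simp
    finally show ?thesis .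
  qed
  have e2: "c < d \<Longrightarrow> b < n \<Longrightarrow> (\<Sum>l\<le>j. \<Sum>i<n*d. cnj (w (j - l) $ i) * Q lam 1 (pencil_coeffs ?AA ?BB) l i (c*n+b)) =
     lam * Bl n d A c b (\<lambda>i. cnj (w j $ i)) - Al n d A c b (\<lambda>i. cnj (w j $ i)) + (if j = 0 then 0 else Bl n d A c b (\<lambda>i. cnj (w (j-1) $ i)))" for j c b
    using e by blast
  show ?thesis unfolding left_chain_Q lblk_def all_blocks by (simp only: e2 cong: imp_cong)
qed

lemma blk_div2[simp]: "a < (n::nat) \<Longrightarrow> (n + r*n + a) div n = Suc r"
  using blk_div[of a n "Suc r"] by (simp add: add.assoc)
lemma blk_mod2[simp]: "a < (n::nat) \<Longrightarrow> (n + r*n + a) mod n = a"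
  using blk_mod[of a n "Suc r"] by (simp add: add.assoc)

lemma last_row_T: assumes "d = Suc d'"
  shows "lam * (- (\<Sum>b<n. A d $$ (a,b) * T lam X d' j b)) - (\<Sum>c<d. \<Sum>b<n. A c $$ (a,b) * T lam X c j b)
    + (if j = 0 then 0 else - (\<Sum>b<n. A d $$ (a,b) * T lam X d' (j-1) b))
    = - (\<Sum>l\<le>j. \<Sum>b<n. Q lam d A l a b * X (j - l) b)"
proof -
  have "(\<Sum>b<n. A d $$ (a,b) * T lam X d j b) = lam * (\<Sum>b<n. A d $$ (a,b) * T lam X d' j b)
     + (if j = 0 then 0 else (\<Sum>b<n. A d $$ (a,b) * T lam X d' (j-1) b))"
    unfolding assms T_Suc by (simp add: sum.distrib sum_distrib_left algebra_simps)
  moreover have "(\<Sum>c\<le>d. \<Sum>b<n. A c $$ (a,b) * T lam X c j b) = (\<Sum>c<d. \<Sum>b<n. A c $$ (a,b) * T lam X c j b)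
     + (\<Sum>b<n. A d $$ (a,b) * T lam X d j b)"
    by (simp add: lessThan_Suc_atMost[symmetric] assms)
  ultimately show ?thesis using T_Q[where d=d and n=n and A=A and a=a and lam=lam and X=X and j=j] by (simp add: algebra_simps)
qed

lemma R_fwd: assumes "rblk n d A lam k V" "0 < d"
  shows "\<forall>j<k. \<forall>r<d. \<forall>a<n. V j (r*n+a) = T lam V r j a"
    and "\<forall>j<k. \<forall>a<n. (\<Sum>l\<le>j. \<Sum>b<n. Q lam d A l a b * V (j - l) b) = 0"
proof -
  have cond: "lam * Bs n d A r a (V j) - As n d A r a (V j) + (if j = 0 then 0 else Bs n d A r a (V (j-1))) = 0"
    if "j < k" "r < d" "a < n" for j r a
    using assms(1) that unfolding rblk_def by blast
  have main: "r < d \<Longrightarrow> \<forall>j<k. \<forall>a<n. V j (r*n+a) = T lam V r j a" for r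
  proof (induction r)
    case 0 then show ?case by (simp add: T_0)
  next
    case (Suc r)
    show ?case
    proof (intro allI impI)
      fix j a assume j: "j < k" and a: "a < n"
      have c: "lam * V j (r*n+a) - V j ((r+1)*n+a) + (if j = 0 then 0 else V (j-1) (r*n+a)) = 0"
        using cond[OF j _ a, of r] Suc.prems unfolding Bs_def As_def by (cases "j = 0") simp_all
      have ih: "V j (r*n+a) = T lam V r j a" "j \<noteq> 0 \<Longrightarrow> V (j-1) (r*n+a) = T lam V r (j-1) a"
        using Suc j a by auto
      show "V j (Suc r * n + a) = T lam V (Suc r) j a"
        using c ih unfolding T_Suc by (cases "j = 0") (auto simp: algebra_simps)
    qed
  qed
  then show "\<forall>j<k. \<forall>r<d. \<forall>a<n. V j (r*n+a) = T lam V r j a" by blast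
  obtain d' where d': "d = Suc d'" using assms(2) by (cases d) auto
  show "\<forall>j<k. \<forall>a<n. (\<Sum>l\<le>j. \<Sum>b<n. Q lam d A l a b * V (j - l) b) = 0"
  proof (intro allI impI)
    fix j a assume j: "j < k" and a: "a < n"
    have c: "lam * (- (\<Sum>b<n. A d $$ (a,b) * V j (d'*n+b))) - (\<Sum>c<d. \<Sum>b<n. A c $$ (a,b) * V j (c*n+b))
       + (if j = 0 then 0 else - (\<Sum>b<n. A d $$ (a,b) * V (j-1) (d'*n+b))) = 0"
      using cond[OF j _ a, of d'] d' unfolding Bs_def As_def by (cases "j = 0") simp_all
    have e1: "(\<Sum>b<n. A d $$ (a,b) * V j (d'*n+b)) = (\<Sum>b<n. A d $$ (a,b) * T lam V d' j b)"
      using main[of d'] d' j by (intro sum.cong) auto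
    have e2: "j \<noteq> 0 \<Longrightarrow> (\<Sum>b<n. A d $$ (a,b) * V (j-1) (d'*n+b)) = (\<Sum>b<n. A d $$ (a,b) * T lam V d' (j-1) b)"
      using main[of d'] d' j by (intro sum.cong) auto
    have e3: "(\<Sum>c<d. \<Sum>b<n. A c $$ (a,b) * V j (c*n+b)) = (\<Sum>c<d. \<Sum>b<n. A c $$ (a,b) * T lam V c j b)"
      using main j by (intro sum.cong) auto
    have "lam * (- (\<Sum>b<n. A d $$ (a,b) * T lam V d' j b)) - (\<Sum>c<d. \<Sum>b<n. A c $$ (a,b) * T lam V c j b)
       + (if j = 0 then 0 else - (\<Sum>b<n. A d $$ (a,b) * T lam V d' (j-1) b)) = 0"
      using c e1 e2 e3 by (cases "j = 0") auto
    then show "(\<Sum>l\<le>j. \<Sum>b<n. Q lam d A l a b * V (j - l) b) = 0"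
      unfolding last_row_T[OF d'] by simp
  qed
qed

lemma R_bwd: assumes "\<forall>j<k. \<forall>a<n. (\<Sum>l\<le>j. \<Sum>b<n. Q lam d A l a b * X (j - l) b) = 0"
  shows "rblk n d A lam k (\<lambda>j i. T lam X (i div n) j (i mod n))"
  unfolding rblk_def
proof (intro allI impI)
  fix j r a assume j: "j < k" and r: "r < d" and a: "a < n"
  show "lam * Bs n d A r a (\<lambda>i. T lam X (i div n) j (i mod n)) - As n d A r a (\<lambda>i. T lam X (i div n) j (i mod n))
     + (if j = 0 then 0 else Bs n d A r a (\<lambda>i. T lam X (i div n) (j-1) (i mod n))) = 0"
  proof (cases "r+1 < d")
    case True
    then show ?thesis using a unfolding Bs_def As_def by (cases "j = 0") (simp_all add: T_Suc)
  next
    case False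
    then obtain d' where d': "d = Suc d'" "r = d'" using r by (cases d) auto
    have "lam * Bs n d A r a (\<lambda>i. T lam X (i div n) j (i mod n)) - As n d A r a (\<lambda>i. T lam X (i div n) j (i mod n))
     + (if j = 0 then 0 else Bs n d A r a (\<lambda>i. T lam X (i div n) (j-1) (i mod n))) =
     lam * (- (\<Sum>b<n. A d $$ (a,b) * T lam X d' j b)) - (\<Sum>c<d. \<Sum>b<n. A c $$ (a,b) * T lam X c j b)
    + (if j = 0 then 0 else - (\<Sum>b<n. A d $$ (a,b) * T lam X d' (j-1) b))"
      using d' unfolding Bs_def As_def by (cases "j = 0") simp_all
    also have "\<dots> = 0" unfolding last_row_T[OF d'(1)] using assms j a by simp
    finally show ?thesis .
  qed
qed




lemma lin1: "(x::complex) - (u + y) + z = 0 \<Longrightarrow> u = x - y + z"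
proof -
  assume h: "x - (u + y) + z = 0"
  have "x - y + z - u = x - (u + y) + z" by (simp add: algebra_simps)
  then have "x - y + z - u = 0" using h by simp
  then show ?thesis by simp
qed

lemma L_fwd: assumes "lblk n d A lam k U" "d = Suc d'"
  shows "\<forall>j<k. \<forall>c. c+1<d \<longrightarrow> (\<forall>b<n. U j (c*n+b) = - H lam d A n (\<lambda>t a. U t (d'*n+a)) (Suc c) j b)"
    and "\<forall>j<k. \<forall>b<n. H lam d A n (\<lambda>t a. U t (d'*n+a)) 0 j b = 0"
proof -
  define Y where "Y = (\<lambda>t a. U t (d'*n+a))"
  define Z where "Z = (\<lambda>j c b. \<Sum>a<n. Y j a * A c $$ (a,b))"
  have cond: "lam * Bl n d A c b (U j) - Al n d A c b (U j) + (if j = 0 then 0 else Bl n d A c b (U (j-1))) = 0"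
    if "j < k" "c < d" "b < n" for j c b
    using assms(1) that unfolding lblk_def by blast
  have Bl1: "c+1<d \<Longrightarrow> Bl n d A c b (U j) = U j (c*n+b)" for c b j by (simp add: Bl_def)
  have Bl2: "\<not> c+1<d \<Longrightarrow> Bl n d A c b (U j) = - Z j d b" for c b j by (simp add: Bl_def Z_def Y_def assms(2))
  have Al1: "Al n d A c b (U j) = (if 1 \<le> c then U j ((c-1)*n+b) else 0) + Z j c b" for c b j
    by (simp add: Al_def Z_def Y_def assms(2))
  have Hd: "H lam d A n Y d j b = Z j d b" for j b by (simp add: H_d Z_def)
  have Hr: "c \<le> d \<Longrightarrow> H lam d A n Y c j b = lam * H lam d A n Y (Suc c) j b + Z j c b
     + (if j = 0 then 0 else H lam d A n Y (Suc c) (j - 1) b)" for c j b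
    unfolding Z_def by (rule H_rec)
  have ind: "\<forall>c. c + 2 + t = d \<longrightarrow> (\<forall>j<k. \<forall>b<n. U j (c*n+b) = - H lam d A n Y (Suc c) j b)" for t
  proof (induction t)
    case 0
    show ?case
    proof (intro allI impI)
      fix c j b assume c: "c + 2 + 0 = d" and j: "j < k" and b: "b < n"
      have cc: "lam * Bl n d A (Suc c) b (U j) - Al n d A (Suc c) b (U j) + (if j = 0 then 0 else Bl n d A (Suc c) b (U (j-1))) = 0"
        using cond[OF j _ b, of "Suc c"] c by simp
      have h1: "Bl n d A (Suc c) b (U j) = - Z j d b" "Bl n d A (Suc c) b (U (j-1)) = - Z (j-1) d b"
        using Bl2 c by auto
      have h2: "Al n d A (Suc c) b (U j) = U j (c*n+b) + Z j (Suc c) b" using Al1 by simp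
      have h3: "H lam d A n Y (Suc c) j b = lam * Z j d b + Z j (Suc c) b + (if j = 0 then 0 else Z (j-1) d b)"
      proof -
        have dd: "Suc (Suc c) = d" using c by simp
        have "H lam d A n Y (Suc c) j b = lam * H lam d A n Y (Suc (Suc c)) j b + Z j (Suc c) b
          + (if j = 0 then 0 else H lam d A n Y (Suc (Suc c)) (j - 1) b)"
          using Hr[of "Suc c" j b] c by simp
        then show ?thesis unfolding dd Hd by simp
      qed
      have eq: "U j (c*n+b) = lam * Bl n d A (Suc c) b (U j) - Z j (Suc c) b + (if j = 0 then 0 else Bl n d A (Suc c) b (U (j-1)))"
        using cc unfolding h2 by (rule lin1)
      show "U j (c*n+b) = - H lam d A n Y (Suc c) j b"
        unfolding eq h3 using h1 by (cases "j = 0") (simp_all add: algebra_simps)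
    qed
  next
    case (Suc t)
    show ?case
    proof (intro allI impI)
      fix c j b assume c: "c + 2 + Suc t = d" and j: "j < k" and b: "b < n"
      have ih: "\<forall>j<k. \<forall>b<n. U j (Suc c*n+b) = - H lam d A n Y (Suc (Suc c)) j b"
        using Suc.IH c by auto
      have cc: "lam * Bl n d A (Suc c) b (U j) - Al n d A (Suc c) b (U j) + (if j = 0 then 0 else Bl n d A (Suc c) b (U (j-1))) = 0"
        using cond[OF j _ b, of "Suc c"] c by simp
      have h1: "Bl n d A (Suc c) b (U j) = - H lam d A n Y (Suc (Suc c)) j b"
        "j \<noteq> 0 \<Longrightarrow> Bl n d A (Suc c) b (U (j-1)) = - H lam d A n Y (Suc (Suc c)) (j-1) b"
        using Bl1[of "Suc c"] c ih j b by auto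
      have h2: "Al n d A (Suc c) b (U j) = U j (c*n+b) + Z j (Suc c) b" using Al1 by simp
      have h3: "H lam d A n Y (Suc c) j b = lam * H lam d A n Y (Suc (Suc c)) j b + Z j (Suc c) b
         + (if j = 0 then 0 else H lam d A n Y (Suc (Suc c)) (j - 1) b)"
        using Hr[of "Suc c" j b] c by simp
      have eq: "U j (c*n+b) = lam * Bl n d A (Suc c) b (U j) - Z j (Suc c) b + (if j = 0 then 0 else Bl n d A (Suc c) b (U (j-1)))"
        using cc unfolding h2 by (rule lin1)
      show "U j (c*n+b) = - H lam d A n Y (Suc c) j b"
        unfolding eq h3 using h1 by (cases "j = 0") (simp_all add: algebra_simps)
    qed
  qed
  have part1: "\<forall>j<k. \<forall>c. c+1<d \<longrightarrow> (\<forall>b<n. U j (c*n+b) = - H lam d A n Y (Suc c) j b)"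
  proof (intro allI impI)
    fix j c b assume "j < k" "c + 1 < d" "b < n"
    then show "U j (c*n+b) = - H lam d A n Y (Suc c) j b" using ind[of "d - c - 2"] by auto
  qed
  then show "\<forall>j<k. \<forall>c. c+1<d \<longrightarrow> (\<forall>b<n. U j (c*n+b) = - H lam d A n (\<lambda>t a. U t (d'*n+a)) (Suc c) j b)"
    unfolding Y_def .
  have "H lam d A n Y 0 j b = 0" if j: "j < k" and b: "b < n" for j b
  proof -
    have cc: "lam * Bl n d A 0 b (U j) - Al n d A 0 b (U j) + (if j = 0 then 0 else Bl n d A 0 b (U (j-1))) = 0"
      using cond[OF j _ b, of 0] assms(2) by simp
    have h2: "Al n d A 0 b (U j) = Z j 0 b" using Al1 by simp
    have h3: "H lam d A n Y 0 j b = lam * H lam d A n Y 1 j b + Z j 0 b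
         + (if j = 0 then 0 else H lam d A n Y 1 (j - 1) b)"
      using Hr[of 0 j b] by simp
    have h1: "Bl n d A 0 b (U j) = - H lam d A n Y 1 j b"
        "j \<noteq> 0 \<Longrightarrow> Bl n d A 0 b (U (j-1)) = - H lam d A n Y 1 (j-1) b"
    proof -
      show "Bl n d A 0 b (U j) = - H lam d A n Y 1 j b"
      proof (cases "1 < d")
        case True then show ?thesis using Bl1[of 0] part1[rule_format, of j 0 b] j b by simp
      next
        case False then have "d = 1" using assms(2) by simp
        then show ?thesis using Bl2[of 0] Hd by simp
      qed
      assume "j \<noteq> 0"
      show "Bl n d A 0 b (U (j-1)) = - H lam d A n Y 1 (j-1) b"
      proof (cases "1 < d")
        case True then show ?thesis using Bl1[of 0] part1[rule_format, of "j-1" 0 b] j b by simp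
      next
        case False then have "d = 1" using assms(2) by simp
        then show ?thesis using Bl2[of 0] Hd by simp
      qed
    qed
    have "H lam d A n Y 0 j b = - (lam * Bl n d A 0 b (U j) - Al n d A 0 b (U j) + (if j = 0 then 0 else Bl n d A 0 b (U (j-1))))"
      unfolding h3 h2 using h1 by (cases "j = 0") (simp_all add: algebra_simps)
    then show ?thesis using cc by simp
  qed
  then show "\<forall>j<k. \<forall>b<n. H lam d A n (\<lambda>t a. U t (d'*n+a)) 0 j b = 0" unfolding Y_def by blast
qed

lemma L_bwd: assumes "\<forall>j<k. \<forall>b<n. H lam d A n Y 0 j b = 0" "d = Suc d'"
  shows "lblk n d A lam k (\<lambda>j i. if i div n + 1 < d then - H lam d A n Y (i div n + 1) j (i mod n) else Y j (i mod n))"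
  unfolding lblk_def
proof (intro allI impI)
  define U where "U = (\<lambda>j i. if i div n + 1 < d then - H lam d A n Y (i div n + 1) j (i mod n) else Y j (i mod n))"
  fix j c b assume j: "j < k" and c: "c < d" and b: "b < n"
  define Z where "Z = (\<lambda>j c b. \<Sum>a<n. Y j a * A c $$ (a,b))"
  have Zeq: "(\<Sum>a<n. U j ((d-1)*n+a) * A c' $$ (a,b)) = Z j c' b" for j c'
    unfolding Z_def U_def using assms(2) by (intro sum.cong) auto
  have Bl: "Bl n d A c b (U j') = - H lam d A n Y (Suc c) j' b" for j'
  proof (cases "c+1<d")
    case True then show ?thesis using b by (simp add: Bl_def U_def)
  next
    case False
    then have "Suc c = d" using c by simp
    then show ?thesis using False Zeq[of j' d] by (simp add: Bl_def H_d Z_def)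
  qed
  have Al: "Al n d A c b (U j) = (if 1 \<le> c then - H lam d A n Y c j b else 0) + Z j c b"
  proof -
    have "1 \<le> c \<Longrightarrow> U j ((c-1)*n+b) = - H lam d A n Y c j b"
      using c b by (simp add: U_def)
    then show ?thesis unfolding Al_def Zeq by simp
  qed
  have Hr: "H lam d A n Y c j b = lam * H lam d A n Y (Suc c) j b + Z j c b
     + (if j = 0 then 0 else H lam d A n Y (Suc c) (j - 1) b)"
    unfolding Z_def using c by (intro H_rec) simp
  have "lam * Bl n d A c b (U j) - Al n d A c b (U j) + (if j = 0 then 0 else Bl n d A c b (U (j-1)))
     = (if 1 \<le> c then 0 else - H lam d A n Y 0 j b)"
    unfolding Bl Al using Hr by (cases "j = 0"; cases "c = 0") (simp_all add: algebra_simps Suc_le_eq)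
  also have "\<dots> = 0" using assms(1) j b by simp
  finally show "lam * Bl n d A c b (\<lambda>i. if i div n + 1 < d then - H lam d A n Y (i div n + 1) j (i mod n) else Y j (i mod n))
     - Al n d A c b (\<lambda>i. if i div n + 1 < d then - H lam d A n Y (i div n + 1) j (i mod n) else Y j (i mod n))
     + (if j = 0 then 0 else Bl n d A c b (\<lambda>i. if i div n + 1 < d then - H lam d A n Y (i div n + 1) (j-1) (i mod n) else Y (j-1) (i mod n))) = 0"
    unfolding U_def .
qed

lemma rblk_cong: assumes "\<And>j i. i < n*d \<Longrightarrow> V j i = V' j i"
  shows "rblk n d A lam k V \<longleftrightarrow> rblk n d A lam k V'"
proof -
  have lt: "r < d \<Longrightarrow> a < n \<Longrightarrow> r*n+a < n*d" for r a by (rule blk_lt)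
  have Bs: "Bs n d A r a (V j) = Bs n d A r a (V' j)" if "r < d" "a < n" for r a j
  proof -
    have "d - 1 < d" using that by simp
    then show ?thesis unfolding Bs_def using that assms lt by (auto intro!: sum.cong)
  qed
  have As: "As n d A r a (V j) = As n d A r a (V' j)" if "r < d" "a < n" for r a j
  proof (cases "r + 1 < d")
    case True
    then have "n + r*n + a < n*d" using lt[of "Suc r" a] that by simp
    then show ?thesis unfolding As_def using True assms by simp
  next
    case False
    then show ?thesis unfolding As_def using that assms lt by (auto intro!: sum.cong)
  qed
  show ?thesis unfolding rblk_def using Bs As by simp
qed

lemma lblk_cong: assumes "\<And>j i. i < n*d \<Longrightarrow> U j i = U' j i"
  shows "lblk n d A lam k U \<longleftrightarrow> lblk n d A lam k U'"
proof -
  have lt: "r < d \<Longrightarrow> a < n \<Longrightarrow> r*n+a < n*d" for r a by (rule blk_lt)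
  have Bl: "Bl n d A c b (U j) = Bl n d A c b (U' j)" if "c < d" "b < n" for c b j
  proof -
    have "d - 1 < d" using that by simp
    then show ?thesis unfolding Bl_def using that assms lt by (auto intro!: sum.cong)
  qed
  have Al: "Al n d A c b (U j) = Al n d A c b (U' j)" if "c < d" "b < n" for c b j
  proof -
    have "d - 1 < d" using that by simp
    moreover have "1 \<le> c \<Longrightarrow> c - 1 < d" using that by simp
    ultimately show ?thesis unfolding Al_def using that assms lt by (auto intro!: sum.cong)
  qed
  show ?thesis unfolding lblk_def using Bl Al by simp
qed

lemma sel_first_carrier: "sel_first n d \<in> carrier_mat n (n*d)"
  by (simp add: sel_first_def)
lemma sel_last_carrier: "sel_last n d \<in> carrier_mat n (n*d)"
  by (simp add: sel_last_def)

lemma sel_first_apply: assumes "v \<in> carrier_vec (n*d)" "a < n" "0 < d"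
  shows "(sel_first n d *\<^sub>v v) $ a = v $ a"
proof -
  have an: "a < n*d" using assms by (metis blk_lt mult_zero_left add_0)
  have "(sel_first n d *\<^sub>v v) $ a = (\<Sum>k<n*d. (if k = a then 1 else 0) * v $ k)"
    using assms an by (subst mult_vec_sum[OF sel_first_carrier]) (auto simp: sel_first_def intro!: sum.cong)
  also have "\<dots> = v $ a" using an by (simp add: if_distrib[of "\<lambda>x. x * _"] cong: if_cong)
  finally show ?thesis .
qed

lemma sel_last_apply: assumes "v \<in> carrier_vec (n*d)" "a < n" "d = Suc d'"
  shows "(sel_last n d *\<^sub>v v) $ a = v $ (d'*n+a)"
proof -
  have an: "d'*n+a < n*d" using assms by (intro blk_lt) auto
  have "(sel_last n d *\<^sub>v v) $ a = (\<Sum>k<n*d. (if k = d'*n+a then 1 else 0) * v $ k)"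
    using assms an by (subst mult_vec_sum[OF sel_last_carrier]) (auto simp: sel_last_def intro!: sum.cong)
  also have "\<dots> = v $ (d'*n+a)" using an by (simp add: if_distrib[of "\<lambda>x. x * _"] cong: if_cong)
  finally show ?thesis .
qed

lemma mp_deriv_0: "mp_deriv n d C 0 z = mp_eval n d C z"
  by (simp add: mp_deriv_def mp_eval_def atLeast0AtMost)

lemma eig_chain: "mp_eigenvalue n d C lam \<longleftrightarrow>
  (\<exists>x. right_jordan_chain n d C lam 1 x \<and> x 0 \<noteq> 0\<^sub>v n) \<and> (\<exists>y. left_jordan_chain n d C lam 1 y \<and> y 0 \<noteq> 0\<^sub>v n)"
proof -
  let ?P = "mp_eval n d C lam"
  have Pc: "?P \<in> carrier_mat n n" by (simp add: mp_eval_def)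
  have r: "right_jordan_chain n d C lam 1 (\<lambda>_. x) \<longleftrightarrow> x \<in> carrier_vec n \<and> ?P *\<^sub>v x = 0\<^sub>v n" for x
  proof
    assume h: "right_jordan_chain n d C lam 1 (\<lambda>_. x)"
    then have xc: "x \<in> carrier_vec n" unfolding right_jordan_chain_def by auto
    have "\<forall>a<n. (\<Sum>b<n. ?P $$ (a,b) * x $ b) = 0" using h unfolding right_jordan_chain_def by (auto simp: mp_deriv_0)
    then have "\<And>i. i < n \<Longrightarrow> (?P *\<^sub>v x) $ i = 0" using mult_vec_sum[OF Pc xc] by metis
    then have "?P *\<^sub>v x = 0\<^sub>v n" using xc Pc by (intro eq_vecI) auto
    then show "x \<in> carrier_vec n \<and> ?P *\<^sub>v x = 0\<^sub>v n" using xc by simp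
  next
    assume h: "x \<in> carrier_vec n \<and> ?P *\<^sub>v x = 0\<^sub>v n"
    then have "\<forall>a<n. (\<Sum>b<n. ?P $$ (a,b) * x $ b) = 0"
      using mult_vec_sum[OF Pc] by (metis index_zero_vec(1))
    then show "right_jordan_chain n d C lam 1 (\<lambda>_. x)" using h unfolding right_jordan_chain_def by (auto simp: mp_deriv_0)
  qed
  have PTc: "transpose_mat ?P \<in> carrier_mat n n" using Pc by simp
  have l: "left_jordan_chain n d C lam 1 (\<lambda>_. y) \<longleftrightarrow> y \<in> carrier_vec n \<and> (transpose_mat ?P) *\<^sub>v conjugate y = 0\<^sub>v n" for y
  proof -
    have e: "((transpose_mat ?P) *\<^sub>v conjugate y) $ b = (\<Sum>a<n. cnj (y $ a) * ?P $$ (a,b))" if "y \<in> carrier_vec n" "b < n" for b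
      using that Pc by (subst mult_vec_sum[OF PTc]) (auto intro!: sum.cong simp: mult.commute)
    show ?thesis
    proof
      assume h: "left_jordan_chain n d C lam 1 (\<lambda>_. y)"
      then have yc: "y \<in> carrier_vec n" unfolding left_jordan_chain_def by auto
      have "\<forall>b<n. (\<Sum>a<n. cnj (y $ a) * ?P $$ (a,b)) = 0" using h unfolding left_jordan_chain_def by (auto simp: mp_deriv_0)
      then show "y \<in> carrier_vec n \<and> (transpose_mat ?P) *\<^sub>v conjugate y = 0\<^sub>v n"
        using yc e Pc by (auto intro!: eq_vecI)
    next
      assume h: "y \<in> carrier_vec n \<and> (transpose_mat ?P) *\<^sub>v conjugate y = 0\<^sub>v n"
      then have "\<forall>b<n. (\<Sum>a<n. cnj (y $ a) * ?P $$ (a,b)) = 0"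
        using e by (metis index_zero_vec(1))
      then show "left_jordan_chain n d C lam 1 (\<lambda>_. y)" using h unfolding left_jordan_chain_def by (auto simp: mp_deriv_0)
    qed
  qed
  have r2: "(\<exists>x. right_jordan_chain n d C lam 1 x \<and> x 0 \<noteq> 0\<^sub>v n) \<longleftrightarrow> (\<exists>x \<in> carrier_vec n. x \<noteq> 0\<^sub>v n \<and> ?P *\<^sub>v x = 0\<^sub>v n)"
  proof
    assume "\<exists>x. right_jordan_chain n d C lam 1 x \<and> x 0 \<noteq> 0\<^sub>v n"
    then obtain x where x: "right_jordan_chain n d C lam 1 x" "x 0 \<noteq> 0\<^sub>v n" by blast
    have "right_jordan_chain n d C lam 1 (\<lambda>_. x 0)" using x(1) unfolding right_jordan_chain_def by auto
    then show "\<exists>x \<in> carrier_vec n. x \<noteq> 0\<^sub>v n \<and> ?P *\<^sub>v x = 0\<^sub>v n" using r x(2) by blast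
  next
    assume "\<exists>x \<in> carrier_vec n. x \<noteq> 0\<^sub>v n \<and> ?P *\<^sub>v x = 0\<^sub>v n"
    then show "\<exists>x. right_jordan_chain n d C lam 1 x \<and> x 0 \<noteq> 0\<^sub>v n" using r by blast
  qed
  have l2: "(\<exists>y. left_jordan_chain n d C lam 1 y \<and> y 0 \<noteq> 0\<^sub>v n) \<longleftrightarrow> (\<exists>y \<in> carrier_vec n. y \<noteq> 0\<^sub>v n \<and> (transpose_mat ?P) *\<^sub>v conjugate y = 0\<^sub>v n)"
  proof
    assume "\<exists>y. left_jordan_chain n d C lam 1 y \<and> y 0 \<noteq> 0\<^sub>v n"
    then obtain y where y: "left_jordan_chain n d C lam 1 y" "y 0 \<noteq> 0\<^sub>v n" by blast
    have "left_jordan_chain n d C lam 1 (\<lambda>_. y 0)" using y(1) unfolding left_jordan_chain_def by auto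
    then show "\<exists>y \<in> carrier_vec n. y \<noteq> 0\<^sub>v n \<and> (transpose_mat ?P) *\<^sub>v conjugate y = 0\<^sub>v n" using l y(2) by blast
  next
    assume "\<exists>y \<in> carrier_vec n. y \<noteq> 0\<^sub>v n \<and> (transpose_mat ?P) *\<^sub>v conjugate y = 0\<^sub>v n"
    then show "\<exists>y. left_jordan_chain n d C lam 1 y \<and> y 0 \<noteq> 0\<^sub>v n" using l by blast
  qed
  show ?thesis unfolding mp_eigenvalue_def r2 l2 ..
qed




lemma RT1: fixes v :: "nat \<Rightarrow> complex vec" assumes "right_jordan_chain (n*d) 1 (pencil_coeffs (comp_A n d A) (comp_B n d A)) lam k v" "0 < d"
  shows "right_jordan_chain n d A lam k (\<lambda>j. sel_first n d *\<^sub>v v j)"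
    and "\<forall>j<k. \<forall>r<d. \<forall>a<n. v j $ (r*n+a) = T lam (\<lambda>j i. v j $ i) r j a"
proof -
  have vc: "\<forall>j<k. v j \<in> carrier_vec (n*d)" and rb: "rblk n d A lam k (\<lambda>j i. v j $ i)"
    using assms(1) unfolding pencil_right_iff by auto
  note R = R_fwd[OF rb assms(2)]
  show "\<forall>j<k. \<forall>r<d. \<forall>a<n. v j $ (r*n+a) = T lam (\<lambda>j i. v j $ i) r j a" using R(1) .
  have c1: "\<forall>j<k. sel_first n d *\<^sub>v v j \<in> carrier_vec n"
    using sel_first_carrier vc by (auto intro: mult_mat_vec_carrier)
  have c2: "(\<Sum>l\<le>j. \<Sum>b<n. Q lam d A l a b * (sel_first n d *\<^sub>v v (j - l)) $ b) = 0" if "j < k" "a < n" for j a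
  proof -
    have "(\<Sum>l\<le>j. \<Sum>b<n. Q lam d A l a b * (sel_first n d *\<^sub>v v (j - l)) $ b) =
          (\<Sum>l\<le>j. \<Sum>b<n. Q lam d A l a b * v (j - l) $ b)"
      using that vc assms(2) by (intro sum.cong refl) (simp add: sel_first_apply)
    also have "\<dots> = 0" using R(2) that by simp
    finally show ?thesis .
  qed
  show "right_jordan_chain n d A lam k (\<lambda>j. sel_first n d *\<^sub>v v j)"
    unfolding right_chain_Q using c1 c2 by simp
qed

lemma RT2: fixes x :: "nat \<Rightarrow> complex vec" assumes "right_jordan_chain n d A lam k x" "0 < d"
  shows "\<exists>v. right_jordan_chain (n*d) 1 (pencil_coeffs (comp_A n d A) (comp_B n d A)) lam k v
     \<and> (\<forall>j<k. sel_first n d *\<^sub>v v j = x j)"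
proof -
  define X where "X = (\<lambda>t a. x t $ a)"
  have xc: "\<forall>j<k. x j \<in> carrier_vec n" and cond: "\<forall>j<k. \<forall>a<n. (\<Sum>l\<le>j. \<Sum>b<n. Q lam d A l a b * X (j - l) b) = 0"
    using assms(1) unfolding right_chain_Q X_def by auto
  define v where "v = (\<lambda>j. vec (n*d) (\<lambda>i. T lam X (i div n) j (i mod n)))"
  have rb: "rblk n d A lam k (\<lambda>j i. v j $ i)"
  proof -
    have "\<And>j i. i < n*d \<Longrightarrow> v j $ i = T lam X (i div n) j (i mod n)" by (simp add: v_def)
    then show ?thesis using R_bwd[OF cond] rblk_cong[where V="\<lambda>j i. v j $ i" and V'="\<lambda>j i. T lam X (i div n) j (i mod n)" and A=A and lam=lam and k=k] by blast
  qed
  have vc: "\<forall>j<k. v j \<in> carrier_vec (n*d)" by (simp add: v_def)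
  have ch: "right_jordan_chain (n*d) 1 (pencil_coeffs (comp_A n d A) (comp_B n d A)) lam k v"
    unfolding pencil_right_iff using rb vc by simp
  have "sel_first n d *\<^sub>v v j = x j" if j: "j < k" for j
  proof (rule eq_vecI)
    show "dim_vec (sel_first n d *\<^sub>v v j) = dim_vec (x j)" 
    proof -
      have "x j \<in> carrier_vec n" using xc j by blast
      then have "dim_vec (x j) = n" by (rule carrier_vecD)
      then show ?thesis by (simp add: sel_first_def)
    qed
  next
    fix a assume "a < dim_vec (x j)"
    then have a: "a < n" using xc j by auto
    have an: "a < n*d" using blk_lt[of 0 d a n] a assms(2) by simp
    have "(sel_first n d *\<^sub>v v j) $ a = v j $ a" using vc j a assms(2) by (simp add: sel_first_apply)
    also have "\<dots> = T lam X 0 j a" using an a by (simp add: v_def)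
    also have "\<dots> = x j $ a" by (simp add: T_0 X_def)
    finally show "(sel_first n d *\<^sub>v v j) $ a = x j $ a" .
  qed
  then show ?thesis using ch by blast
qed

lemma LT1: fixes w :: "nat \<Rightarrow> complex vec" assumes "left_jordan_chain (n*d) 1 (pencil_coeffs (comp_A n d A) (comp_B n d A)) lam k w" "d = Suc d'"
  shows "left_jordan_chain n d A lam k (\<lambda>j. sel_last n d *\<^sub>v w j)"
    and "\<forall>j<k. \<forall>c. c+1<d \<longrightarrow> (\<forall>b<n. cnj (w j $ (c*n+b)) = - H lam d A n (\<lambda>t a. cnj (w t $ (d'*n+a))) (Suc c) j b)"
proof -
  have wc: "\<forall>j<k. w j \<in> carrier_vec (n*d)" and lb: "lblk n d A lam k (\<lambda>j i. cnj (w j $ i))"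
    using assms(1) unfolding pencil_left_iff by auto
  note L = L_fwd[OF lb assms(2)]
  show "\<forall>j<k. \<forall>c. c+1<d \<longrightarrow> (\<forall>b<n. cnj (w j $ (c*n+b)) = - H lam d A n (\<lambda>t a. cnj (w t $ (d'*n+a))) (Suc c) j b)"
    using L(1) .
  have c1: "\<forall>j<k. sel_last n d *\<^sub>v w j \<in> carrier_vec n"
    using sel_last_carrier wc by (auto intro: mult_mat_vec_carrier)
  have c2: "(\<Sum>l\<le>j. \<Sum>a<n. cnj ((sel_last n d *\<^sub>v w (j - l)) $ a) * Q lam d A l a b) = 0" if "j < k" "b < n" for j b
  proof -
    have "(\<Sum>l\<le>j. \<Sum>a<n. cnj ((sel_last n d *\<^sub>v w (j - l)) $ a) * Q lam d A l a b) =
          (\<Sum>l\<le>j. \<Sum>a<n. cnj (w (j - l) $ (d'*n+a)) * Q lam d A l a b)"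
      using that wc assms(2) by (intro sum.cong refl) (simp add: sel_last_apply)
    also have "\<dots> = H lam d A n (\<lambda>t a. cnj (w t $ (d'*n+a))) 0 j b" by (simp add: H0_Q)
    also have "\<dots> = 0" using L(2) that by simp
    finally show ?thesis .
  qed
  show "left_jordan_chain n d A lam k (\<lambda>j. sel_last n d *\<^sub>v w j)"
    unfolding left_chain_Q using c1 c2 by simp
qed

lemma LT2: fixes x :: "nat \<Rightarrow> complex vec" assumes "left_jordan_chain n d A lam k x" "d = Suc d'"
  shows "\<exists>w. left_jordan_chain (n*d) 1 (pencil_coeffs (comp_A n d A) (comp_B n d A)) lam k w
     \<and> (\<forall>j<k. sel_last n d *\<^sub>v w j = x j)"
proof -
  define Y where "Y = (\<lambda>t a. cnj (x t $ a))"
  have xc: "\<forall>j<k. x j \<in> carrier_vec n" and cond0: "\<forall>j<k. \<forall>b<n. (\<Sum>l\<le>j. \<Sum>a<n. Y (j - l) a * Q lam d A l a b) = 0"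
    using assms(1) unfolding left_chain_Q Y_def by auto
  have cond: "\<forall>j<k. \<forall>b<n. H lam d A n Y 0 j b = 0" using cond0 by (simp add: H0_Q)
  define U where "U = (\<lambda>j i. if i div n + 1 < d then - H lam d A n Y (i div n + 1) j (i mod n) else Y j (i mod n))"
  define w where "w = (\<lambda>j. vec (n*d) (\<lambda>i. cnj (U j i)))"
  have lb: "lblk n d A lam k (\<lambda>j i. cnj (w j $ i))"
  proof -
    have "lblk n d A lam k U" using L_bwd[OF cond assms(2)] unfolding U_def .
    moreover have "\<And>j i. i < n*d \<Longrightarrow> cnj (w j $ i) = U j i" by (simp add: w_def)
    ultimately show ?thesis using lblk_cong[where U="\<lambda>j i. cnj (w j $ i)" and U'=U and A=A and lam=lam and k=k] by blast
  qed
  have wc: "\<forall>j<k. w j \<in> carrier_vec (n*d)" by (simp add: w_def)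
  have ch: "left_jordan_chain (n*d) 1 (pencil_coeffs (comp_A n d A) (comp_B n d A)) lam k w"
    unfolding pencil_left_iff using lb wc by simp
  have "sel_last n d *\<^sub>v w j = x j" if j: "j < k" for j
  proof (rule eq_vecI)
    show "dim_vec (sel_last n d *\<^sub>v w j) = dim_vec (x j)" 
    proof -
      have "x j \<in> carrier_vec n" using xc j by blast
      then have "dim_vec (x j) = n" by (rule carrier_vecD)
      then show ?thesis by (simp add: sel_last_def)
    qed
  next
    fix a assume "a < dim_vec (x j)"
    then have a: "a < n" using xc j by auto
    have an: "d'*n+a < n*d" using a assms(2) by (intro blk_lt) auto
    have "(sel_last n d *\<^sub>v w j) $ a = w j $ (d'*n+a)" using wc j a assms(2) by (simp add: sel_last_apply)
    also have "\<dots> = x j $ a" using an a assms(2) by (simp add: w_def U_def Y_def)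
    finally show "(sel_last n d *\<^sub>v w j) $ a = x j $ a" .
  qed
  then show ?thesis using ch by blast
qed

lemma H_zero0: assumes "\<forall>a<n. Y 0 a = 0" shows "H lam d A n Y c 0 b = 0"
  using assms by (simp add: H_def conv_def)

lemma vec_zero_blocks: fixes v :: "complex vec" assumes "v \<in> carrier_vec (n*d)" "\<forall>r<d. \<forall>a<n. v $ (r*n+a) = 0"
  shows "v = 0\<^sub>v (n*d)"
proof -
  have "\<forall>i<n*d. v $ i = 0" unfolding all_blocks using assms(2) by blast
  then show ?thesis using assms(1) by (intro eq_vecI) auto
qed

lemma eig_equiv: assumes "d = Suc d'"
  shows "mp_eigenvalue n d A lam \<longleftrightarrow> mp_eigenvalue (n*d) 1 (pencil_coeffs (comp_A n d A) (comp_B n d A)) lam"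
proof -
  let ?pc = "pencil_coeffs (comp_A n d A) (comp_B n d A)"
  have d0: "0 < d" using assms by simp
  have r: "(\<exists>x. right_jordan_chain n d A lam 1 x \<and> x 0 \<noteq> 0\<^sub>v n) \<longleftrightarrow>
           (\<exists>v. right_jordan_chain (n*d) 1 ?pc lam 1 v \<and> v 0 \<noteq> 0\<^sub>v (n*d))"
  proof
    assume "\<exists>x. right_jordan_chain n d A lam 1 x \<and> x 0 \<noteq> 0\<^sub>v n"
    then obtain x where x: "right_jordan_chain n d A lam 1 x" "x 0 \<noteq> 0\<^sub>v n" by blast
    obtain v where v: "right_jordan_chain (n*d) 1 ?pc lam 1 v" "\<forall>j<1. sel_first n d *\<^sub>v v j = x j"
      using RT2[OF x(1) d0] by blast
    have "v 0 \<noteq> 0\<^sub>v (n*d)"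
    proof
      assume "v 0 = 0\<^sub>v (n*d)"
      then have "sel_first n d *\<^sub>v v 0 = 0\<^sub>v n" using sel_first_carrier[of n d] by auto
      then show False using v(2) x(2) by simp
    qed
    then show "\<exists>v. right_jordan_chain (n*d) 1 ?pc lam 1 v \<and> v 0 \<noteq> 0\<^sub>v (n*d)" using v(1) by blast
  next
    assume "\<exists>v. right_jordan_chain (n*d) 1 ?pc lam 1 v \<and> v 0 \<noteq> 0\<^sub>v (n*d)"
    then obtain v where v: "right_jordan_chain (n*d) 1 ?pc lam 1 v" "v 0 \<noteq> 0\<^sub>v (n*d)" by blast
    have vc: "v 0 \<in> carrier_vec (n*d)" using v(1) unfolding right_jordan_chain_def by simp
    note R = RT1[OF v(1) d0]
    have "sel_first n d *\<^sub>v v 0 \<noteq> 0\<^sub>v n"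
    proof
      assume h: "sel_first n d *\<^sub>v v 0 = 0\<^sub>v n"
      have z: "\<forall>a<n. v 0 $ a = 0"
      proof (intro allI impI)
        fix a assume a: "a < n"
        have "(sel_first n d *\<^sub>v v 0) $ a = 0" using h a by simp
        then show "v 0 $ a = 0" using sel_first_apply[OF vc a d0] by simp
      qed
      have "\<forall>r<d. \<forall>a<n. v 0 $ (r*n+a) = 0"
        using R(2) z by (simp add: T_def conv_def)
      then have "v 0 = 0\<^sub>v (n*d)" using vec_zero_blocks[OF vc] by blast
      then show False using v(2) by simp
    qed
    then show "\<exists>x. right_jordan_chain n d A lam 1 x \<and> x 0 \<noteq> 0\<^sub>v n" using R(1) by blast
  qed
  have l: "(\<exists>y. left_jordan_chain n d A lam 1 y \<and> y 0 \<noteq> 0\<^sub>v n) \<longleftrightarrow>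
           (\<exists>w. left_jordan_chain (n*d) 1 ?pc lam 1 w \<and> w 0 \<noteq> 0\<^sub>v (n*d))"
  proof
    assume "\<exists>y. left_jordan_chain n d A lam 1 y \<and> y 0 \<noteq> 0\<^sub>v n"
    then obtain x where x: "left_jordan_chain n d A lam 1 x" "x 0 \<noteq> 0\<^sub>v n" by blast
    obtain w where w: "left_jordan_chain (n*d) 1 ?pc lam 1 w" "\<forall>j<1. sel_last n d *\<^sub>v w j = x j"
      using LT2[OF x(1) assms] by blast
    have "w 0 \<noteq> 0\<^sub>v (n*d)"
    proof
      assume "w 0 = 0\<^sub>v (n*d)"
      then have "sel_last n d *\<^sub>v w 0 = 0\<^sub>v n" using sel_last_carrier[of n d] by auto
      then show False using w(2) x(2) by simp
    qed
    then show "\<exists>w. left_jordan_chain (n*d) 1 ?pc lam 1 w \<and> w 0 \<noteq> 0\<^sub>v (n*d)" using w(1) by blast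
  next
    assume "\<exists>w. left_jordan_chain (n*d) 1 ?pc lam 1 w \<and> w 0 \<noteq> 0\<^sub>v (n*d)"
    then obtain w where w: "left_jordan_chain (n*d) 1 ?pc lam 1 w" "w 0 \<noteq> 0\<^sub>v (n*d)" by blast
    have wc: "w 0 \<in> carrier_vec (n*d)" using w(1) unfolding left_jordan_chain_def by simp
    note L = LT1[OF w(1) assms]
    have "sel_last n d *\<^sub>v w 0 \<noteq> 0\<^sub>v n"
    proof
      assume h: "sel_last n d *\<^sub>v w 0 = 0\<^sub>v n"
      have z: "\<forall>a<n. w 0 $ (d'*n+a) = 0"
      proof (intro allI impI)
        fix a assume a: "a < n"
        have "(sel_last n d *\<^sub>v w 0) $ a = 0" using h a by simp
        then show "w 0 $ (d'*n+a) = 0" using sel_last_apply[OF wc a assms] by simp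
      qed
      have Hz: "H lam d A n (\<lambda>t a. cnj (w t $ (d'*n+a))) c 0 b = 0" for c b
        using z by (intro H_zero0) simp
      have "\<forall>r<d. \<forall>a<n. w 0 $ (r*n+a) = 0"
      proof (intro allI impI)
        fix r a assume r: "r < d" and a: "a < n"
        show "w 0 $ (r*n+a) = 0"
        proof (cases "r + 1 < d")
          case True
          then have "cnj (w 0 $ (r*n+a)) = 0" using L(2) a Hz by simp
          then show ?thesis by simp
        next
          case False
          then have "r = d'" using r assms by simp
          then show ?thesis using z a by simp
        qed
      qed
      then have "w 0 = 0\<^sub>v (n*d)" using vec_zero_blocks[OF wc] by blast
      then show False using w(2) by simp
    qed
    then show "\<exists>y. left_jordan_chain n d A lam 1 y \<and> y 0 \<noteq> 0\<^sub>v n" using L(1) by blast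
  qed
  show ?thesis unfolding eig_chain[of n d A] eig_chain[of "n*d" 1 ?pc] r l ..
qed

lemma no_eig_d0: assumes "\<exists>z. det (mp_eval n 0 A z) \<noteq> 0"
  shows "\<not> mp_eigenvalue n 0 A lam"
proof
  assume "mp_eigenvalue n 0 A lam"
  then obtain x where x: "x \<in> carrier_vec n" "x \<noteq> 0\<^sub>v n" "mp_eval n 0 A lam *\<^sub>v x = 0\<^sub>v n"
    unfolding mp_eigenvalue_def by blast
  obtain z where z: "det (mp_eval n 0 A z) \<noteq> 0" using assms by blast
  have e: "mp_eval n 0 A lam = mp_eval n 0 A z" by (simp add: mp_eval_def)
  have c: "mp_eval n 0 A z \<in> carrier_mat n n" by (simp add: mp_eval_def)
  have "det (mp_eval n 0 A z) = 0" using x e by (subst det_0_iff_vec_prod_zero[OF c]) auto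
  then show False using z by simp
qed

lemma no_eig_dim0: "\<not> mp_eigenvalue 0 1 C lam"
proof
  assume "mp_eigenvalue 0 1 C lam"
  then obtain x :: "complex vec" where x: "x \<in> carrier_vec 0" "x \<noteq> 0\<^sub>v 0" unfolding mp_eigenvalue_def by blast
  then show False by (metis carrier_vecD eq_vecI index_zero_vec(2) less_nat_zero_code)
qed

theorem theorem2p1:
  fixes n d :: nat and A :: "nat \<Rightarrow> complex mat" and \<Gamma> :: "real \<Rightarrow> complex"
  assumes "\<forall>j\<le>d. A j \<in> carrier_mat n n"
    and "A d \<noteq> 0\<^sub>m n n"
    and "\<exists>z. det (mp_eval n d A z) \<noteq> 0"
    and "valid_path \<Gamma>" and "simple_path \<Gamma>" and "pathfinish \<Gamma> = pathstart \<Gamma>"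
    and "\<forall>z. z \<notin> path_image \<Gamma> \<longrightarrow> winding_number \<Gamma> z = 0 \<or> winding_number \<Gamma> z = 1"
    and "\<forall>z\<in>path_image \<Gamma>. \<not> mp_eigenvalue n d A z"
  shows "right_alg_eigenspace n d A (enclosed_by \<Gamma>) =
           (\<lambda>y. sel_first n d *\<^sub>v y) `
             right_alg_eigenspace (n*d) 1 (pencil_coeffs (comp_A n d A) (comp_B n d A)) (enclosed_by \<Gamma>) \<and>
         left_alg_eigenspace n d A (enclosed_by \<Gamma>) =
           (\<lambda>y. sel_last n d *\<^sub>v y) `
             left_alg_eigenspace (n*d) 1 (pencil_coeffs (comp_A n d A) (comp_B n d A)) (enclosed_by \<Gamma>)"
proof -
  let ?pc = "pencil_coeffs (comp_A n d A) (comp_B n d A)"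
  let ?Z = "enclosed_by \<Gamma>"
  define SPR where "SPR = {v. \<exists>lam k x i. lam \<in> ?Z \<and> mp_eigenvalue n d A lam \<and> right_jordan_chain n d A lam k x \<and> i < k \<and> v = x i}"
  define SLR where "SLR = {v. \<exists>lam k x i. lam \<in> ?Z \<and> mp_eigenvalue (n*d) 1 ?pc lam \<and> right_jordan_chain (n*d) 1 ?pc lam k x \<and> i < k \<and> v = x i}"
  define SPL where "SPL = {v. \<exists>lam k x i. lam \<in> ?Z \<and> mp_eigenvalue n d A lam \<and> left_jordan_chain n d A lam k x \<and> i < k \<and> v = x i}"
  define SLL where "SLL = {v. \<exists>lam k x i. lam \<in> ?Z \<and> mp_eigenvalue (n*d) 1 ?pc lam \<and> left_jordan_chain (n*d) 1 ?pc lam k x \<and> i < k \<and> v = x i}"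
  have SLRc: "SLR \<subseteq> carrier_vec (n*d)" unfolding SLR_def right_jordan_chain_def by auto
  have SLLc: "SLL \<subseteq> carrier_vec (n*d)" unfolding SLL_def left_jordan_chain_def by auto
  have eR: "right_alg_eigenspace n d A ?Z = cspan n SPR" unfolding right_alg_eigenspace_def SPR_def ..
  have eL: "left_alg_eigenspace n d A ?Z = cspan n SPL" unfolding left_alg_eigenspace_def SPL_def ..
  have eR2: "(\<lambda>y. sel_first n d *\<^sub>v y) ` right_alg_eigenspace (n*d) 1 ?pc ?Z = cspan n ((\<lambda>y. sel_first n d *\<^sub>v y) ` SLR)"
    unfolding right_alg_eigenspace_def SLR_def[symmetric] by (rule cspan_image[OF sel_first_carrier SLRc])
  have eL2: "(\<lambda>y. sel_last n d *\<^sub>v y) ` left_alg_eigenspace (n*d) 1 ?pc ?Z = cspan n ((\<lambda>y. sel_last n d *\<^sub>v y) ` SLL)"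
    unfolding left_alg_eigenspace_def SLL_def[symmetric] by (rule cspan_image[OF sel_last_carrier SLLc])
  have sets: "SPR = (\<lambda>y. sel_first n d *\<^sub>v y) ` SLR \<and> SPL = (\<lambda>y. sel_last n d *\<^sub>v y) ` SLL"
  proof (cases d)
    case 0
    have "SPR = {}" "SPL = {}" unfolding SPR_def SPL_def using no_eig_d0 assms(3) 0 by auto
    moreover have "SLR = {}" "SLL = {}" unfolding SLR_def SLL_def using no_eig_dim0 0 by auto
    ultimately show ?thesis by simp
  next
    case (Suc d')
    have d0: "0 < d" using Suc by simp
    have eig: "mp_eigenvalue n d A lam \<longleftrightarrow> mp_eigenvalue (n*d) 1 ?pc lam" for lam
      by (rule eig_equiv[OF Suc])
    have r1: "SPR \<subseteq> (\<lambda>y. sel_first n d *\<^sub>v y) ` SLR"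
    proof
      fix u assume "u \<in> SPR"
      then obtain lam k x i where h: "lam \<in> ?Z" "mp_eigenvalue n d A lam" "right_jordan_chain n d A lam k x" "i < k" "u = x i"
        unfolding SPR_def by blast
      obtain v where v: "right_jordan_chain (n*d) 1 ?pc lam k v" "\<forall>j<k. sel_first n d *\<^sub>v v j = x j"
        using RT2[OF h(3) d0] by blast
      have "v i \<in> SLR" unfolding SLR_def using h(1,2,4) v(1) eig by blast
      moreover have "u = sel_first n d *\<^sub>v v i" using v(2) h(4,5) by simp
      ultimately show "u \<in> (\<lambda>y. sel_first n d *\<^sub>v y) ` SLR" by blast
    qed
    have r2: "(\<lambda>y. sel_first n d *\<^sub>v y) ` SLR \<subseteq> SPR"
    proof
      fix u assume "u \<in> (\<lambda>y. sel_first n d *\<^sub>v y) ` SLR"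
      then obtain lam k v i where h: "lam \<in> ?Z" "mp_eigenvalue (n*d) 1 ?pc lam" "right_jordan_chain (n*d) 1 ?pc lam k v" "i < k"
        "u = sel_first n d *\<^sub>v v i"
        unfolding SLR_def by blast
      have "right_jordan_chain n d A lam k (\<lambda>j. sel_first n d *\<^sub>v v j)" using RT1(1)[OF h(3) d0] .
      then show "u \<in> SPR" unfolding SPR_def using h(1,2,4,5) eig by blast
    qed
    have l1: "SPL \<subseteq> (\<lambda>y. sel_last n d *\<^sub>v y) ` SLL"
    proof
      fix u assume "u \<in> SPL"
      then obtain lam k x i where h: "lam \<in> ?Z" "mp_eigenvalue n d A lam" "left_jordan_chain n d A lam k x" "i < k" "u = x i"
        unfolding SPL_def by blast
      obtain w where w: "left_jordan_chain (n*d) 1 ?pc lam k w" "\<forall>j<k. sel_last n d *\<^sub>v w j = x j"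
        using LT2[OF h(3) Suc] by blast
      have "w i \<in> SLL" unfolding SLL_def using h(1,2,4) w(1) eig by blast
      moreover have "u = sel_last n d *\<^sub>v w i" using w(2) h(4,5) by simp
      ultimately show "u \<in> (\<lambda>y. sel_last n d *\<^sub>v y) ` SLL" by blast
    qed
    have l2: "(\<lambda>y. sel_last n d *\<^sub>v y) ` SLL \<subseteq> SPL"
    proof
      fix u assume "u \<in> (\<lambda>y. sel_last n d *\<^sub>v y) ` SLL"
      then obtain lam k w i where h: "lam \<in> ?Z" "mp_eigenvalue (n*d) 1 ?pc lam" "left_jordan_chain (n*d) 1 ?pc lam k w" "i < k"
        "u = sel_last n d *\<^sub>v w i"
        unfolding SLL_def by blast
      have "left_jordan_chain n d A lam k (\<lambda>j. sel_last n d *\<^sub>v w j)" using LT1(1)[OF h(3) Suc] .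
      then show "u \<in> SPL" unfolding SPL_def using h(1,2,4,5) eig by blast
    qed
    show ?thesis using r1 r2 l1 l2 by blast
  qed
  show ?thesis unfolding eR eL eR2 eL2 using sets by simp
qed


end
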